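(* Let $(\Omega,\mathcal{F},(\mathcal{F}_t)_{t\in[0,T]},\mathbb{P})$ be a filtered probability space with right-continuous filtration and trivial $\mathcal{F}_0$, on which every local martingale is continuous, and which supports an $(\mathcal{F}_t)$-Brownian motion $W$. Let $\xi=\int_0^T\sigma_u\,dW_u$ for a bounded progressively measurable process $\sigma$. Then for each $p\in[1,2)$ there exists an $(\mathcal{F}_t)$-predictable process $\beta$ with $\mathbb{E}\big[\int_0^T|\beta_u|^p\,du\big]<\infty$ and $\int_0^T\beta_u\,du=\xi$ a.s. *)

theory Defs
  imports "HOL-Probability.Probability"
begin

text \<open>Continuous-time stochastic calculus on the horizon [0,T].
  The filtration is a family F :: real => 'a measure; only the sets of F t matter.\<close>

definition filtered_prob_space :: "'a measure \<Rightarrow> (real \<Rightarrow> 'a measure) \<Rightarrow> real \<Rightarrow> bool" where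
  "filtered_prob_space M F T \<longleftrightarrow> prob_space M \<and>
     (\<forall>t\<in>{0..T}. space (F t) = space M \<and> sets (F t) \<subseteq> sets M) \<and>
     (\<forall>s t. 0 \<le> s \<longrightarrow> s \<le> t \<longrightarrow> t \<le> T \<longrightarrow> sets (F s) \<subseteq> sets (F t))"

definition right_continuous_filtration :: "(real \<Rightarrow> 'a measure) \<Rightarrow> real \<Rightarrow> bool" where
  "right_continuous_filtration F T \<longleftrightarrow>
     (\<forall>t\<in>{0..<T}. sets (F t) = (\<Inter>s\<in>{t<..T}. sets (F s)))"

definition trivial_initial :: "'a measure \<Rightarrow> (real \<Rightarrow> 'a measure) \<Rightarrow> bool" where
  "trivial_initial M F \<longleftrightarrow> (\<forall>A\<in>sets (F 0). measure M A = 0 \<or> measure M A = 1)"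

definition adapted :: "(real \<Rightarrow> 'a measure) \<Rightarrow> real \<Rightarrow> (real \<Rightarrow> 'a \<Rightarrow> real) \<Rightarrow> bool" where
  "adapted F T X \<longleftrightarrow> (\<forall>t\<in>{0..T}. X t \<in> borel_measurable (F t))"

definition is_stopping_time :: "'a measure \<Rightarrow> (real \<Rightarrow> 'a measure) \<Rightarrow> real \<Rightarrow> ('a \<Rightarrow> real) \<Rightarrow> bool" where
  "is_stopping_time M F T \<tau> \<longleftrightarrow> (\<forall>\<omega>\<in>space M. 0 \<le> \<tau> \<omega> \<and> \<tau> \<omega> \<le> T) \<and>
     (\<forall>t\<in>{0..T}. {\<omega>\<in>space M. \<tau> \<omega> \<le> t} \<in> sets (F t))"

definition martingale :: "'a measure \<Rightarrow> (real \<Rightarrow> 'a measure) \<Rightarrow> real \<Rightarrow> (real \<Rightarrow> 'a \<Rightarrow> real) \<Rightarrow> bool" where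
  "martingale M F T X \<longleftrightarrow> adapted F T X \<and> (\<forall>t\<in>{0..T}. integrable M (X t)) \<and>
     (\<forall>s t. 0 \<le> s \<longrightarrow> s \<le> t \<longrightarrow> t \<le> T \<longrightarrow>
        (AE \<omega> in M. real_cond_exp M (F s) (X t) \<omega> = X s \<omega>))"

definition local_martingale :: "'a measure \<Rightarrow> (real \<Rightarrow> 'a measure) \<Rightarrow> real \<Rightarrow> (real \<Rightarrow> 'a \<Rightarrow> real) \<Rightarrow> bool" where
  "local_martingale M F T X \<longleftrightarrow> adapted F T X \<and>
     (\<exists>\<tau> :: nat \<Rightarrow> 'a \<Rightarrow> real. (\<forall>n. is_stopping_time M F T (\<tau> n)) \<and>
        (\<forall>n. \<forall>\<omega>\<in>space M. \<tau> n \<omega> \<le> \<tau> (Suc n) \<omega>) \<and>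
        (AE \<omega> in M. \<exists>n. \<tau> n \<omega> = T) \<and>
        (\<forall>n. martingale M F T (\<lambda>t \<omega>. X (min t (\<tau> n \<omega>)) \<omega>)))"

definition cadlag_paths :: "'a measure \<Rightarrow> real \<Rightarrow> (real \<Rightarrow> 'a \<Rightarrow> real) \<Rightarrow> bool" where
  "cadlag_paths M T X \<longleftrightarrow> (AE \<omega> in M.
     (\<forall>t\<in>{0..<T}. continuous (at t within {t..T}) (\<lambda>s. X s \<omega>)) \<and>
     (\<forall>t\<in>{0<..T}. \<exists>l. ((\<lambda>s. X s \<omega>) \<longlongrightarrow> l) (at t within {0..<t})))"

definition continuous_paths :: "'a measure \<Rightarrow> real \<Rightarrow> (real \<Rightarrow> 'a \<Rightarrow> real) \<Rightarrow> bool" where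
  "continuous_paths M T X \<longleftrightarrow> (AE \<omega> in M. continuous_on {0..T} (\<lambda>t. X t \<omega>))"

definition all_local_martingales_continuous :: "'a measure \<Rightarrow> (real \<Rightarrow> 'a measure) \<Rightarrow> real \<Rightarrow> bool" where
  "all_local_martingales_continuous M F T \<longleftrightarrow>
     (\<forall>X. local_martingale M F T X \<and> cadlag_paths M T X \<longrightarrow> continuous_paths M T X)"

definition brownian_motion :: "'a measure \<Rightarrow> (real \<Rightarrow> 'a measure) \<Rightarrow> real \<Rightarrow> (real \<Rightarrow> 'a \<Rightarrow> real) \<Rightarrow> bool" where
  "brownian_motion M F T W \<longleftrightarrow> adapted F T W \<and>
     (AE \<omega> in M. W 0 \<omega> = 0 \<and> continuous_on {0..T} (\<lambda>t. W t \<omega>)) \<and>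
     (\<forall>s t. 0 \<le> s \<longrightarrow> s < t \<longrightarrow> t \<le> T \<longrightarrow>
        distributed M lborel (\<lambda>\<omega>. W t \<omega> - W s \<omega>) (normal_density 0 (sqrt (t - s))) \<and>
        (\<forall>A\<in>sets (F s). \<forall>B\<in>sets borel.
           measure M (A \<inter> {\<omega>\<in>space M. W t \<omega> - W s \<omega> \<in> B}) =
           measure M A * measure M {\<omega>\<in>space M. W t \<omega> - W s \<omega> \<in> B}))"

definition progressively_measurable :: "(real \<Rightarrow> 'a measure) \<Rightarrow> real \<Rightarrow> (real \<Rightarrow> 'a \<Rightarrow> real) \<Rightarrow> bool" where
  "progressively_measurable F T X \<longleftrightarrow>
     (\<forall>t\<in>{0..T}. (\<lambda>(s, \<omega>). X s \<omega>) \<in> borel_measurable (restrict_space lborel {0..t} \<Otimes>\<^sub>M F t))"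

definition bounded_process :: "'a measure \<Rightarrow> real \<Rightarrow> (real \<Rightarrow> 'a \<Rightarrow> real) \<Rightarrow> bool" where
  "bounded_process M T X \<longleftrightarrow> (\<exists>C. \<forall>t\<in>{0..T}. \<forall>\<omega>\<in>space M. \<bar>X t \<omega>\<bar> \<le> C)"

definition predictable_sigma :: "'a measure \<Rightarrow> (real \<Rightarrow> 'a measure) \<Rightarrow> real \<Rightarrow> (real \<times> 'a) measure" where
  "predictable_sigma M F T = sigma ({0..T} \<times> space M)
     ({{0} \<times> A | A. A \<in> sets (F 0)} \<union>
      {{s<..t} \<times> A | s t A. 0 \<le> s \<and> s < t \<and> t \<le> T \<and> A \<in> sets (F s)})"

text \<open>Simple predictable integrands: partition 0 = t_0 < ... < t_k = T (list ts),
  h i bounded and F(t_i)-measurable; value h i on (t_i, t_{i+1}].\<close>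
definition simple_admissible :: "'a measure \<Rightarrow> (real \<Rightarrow> 'a measure) \<Rightarrow> real \<Rightarrow> real list \<Rightarrow> (nat \<Rightarrow> 'a \<Rightarrow> real) \<Rightarrow> bool" where
  "simple_admissible M F T ts h \<longleftrightarrow> length ts \<ge> 2 \<and> sorted_wrt (<) ts \<and>
     ts ! 0 = 0 \<and> last ts = T \<and>
     (\<forall>i < length ts - 1. h i \<in> borel_measurable (F (ts ! i)) \<and>
        (\<exists>C. \<forall>\<omega>\<in>space M. \<bar>h i \<omega>\<bar> \<le> C))"

definition simple_process :: "real list \<Rightarrow> (nat \<Rightarrow> 'a \<Rightarrow> real) \<Rightarrow> real \<Rightarrow> 'a \<Rightarrow> real" where
  "simple_process ts h t \<omega> = (\<Sum>i < length ts - 1. h i \<omega> * indicator {ts ! i <.. ts ! Suc i} t)"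

definition simple_integral :: "(real \<Rightarrow> 'a \<Rightarrow> real) \<Rightarrow> real list \<Rightarrow> (nat \<Rightarrow> 'a \<Rightarrow> real) \<Rightarrow> 'a \<Rightarrow> real" where
  "simple_integral W ts h \<omega> = (\<Sum>i < length ts - 1. h i \<omega> * (W (ts ! Suc i) \<omega> - W (ts ! i) \<omega>))"

text \<open>xi is (a version of) the Ito integral of sigma against W over [0,T]: the L^2(P)-limit of
  the elementary integrals of simple predictable processes approximating sigma in L^2(dt x dP).\<close>
definition ito_integral_is :: "'a measure \<Rightarrow> (real \<Rightarrow> 'a measure) \<Rightarrow> real \<Rightarrow> (real \<Rightarrow> 'a \<Rightarrow> real)
    \<Rightarrow> (real \<Rightarrow> 'a \<Rightarrow> real) \<Rightarrow> ('a \<Rightarrow> real) \<Rightarrow> bool" where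
  "ito_integral_is M F T W \<sigma> \<xi> \<longleftrightarrow> \<xi> \<in> borel_measurable M \<and>
     (\<exists>ts :: nat \<Rightarrow> real list. \<exists>h :: nat \<Rightarrow> nat \<Rightarrow> 'a \<Rightarrow> real.
        (\<forall>n. simple_admissible M F T (ts n) (h n)) \<and>
        (\<lambda>n. \<integral>\<^sup>+ \<omega>. (\<integral>\<^sup>+ t\<in>{0..T}. ennreal ((simple_process (ts n) (h n) t \<omega> - \<sigma> t \<omega>)\<^sup>2) \<partial>lborel) \<partial>M)
           \<longlonglongrightarrow> 0 \<and>
        (\<lambda>n. \<integral>\<^sup>+ \<omega>. ennreal ((simple_integral W (ts n) (h n) \<omega> - \<xi> \<omega>)\<^sup>2) \<partial>M) \<longlonglongrightarrow> 0)"

end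

theory Submission
  imports Defs
begin

lemma fps_prob: "filtered_prob_space M F T \<Longrightarrow> prob_space M"
  by (simp add: filtered_prob_space_def)

lemma fps_sub:
  assumes "filtered_prob_space M F T" "0 \<le> a" "a \<le> b" "b \<le> T"
    and "f \<in> borel_measurable (F a)"
  shows "f \<in> borel_measurable (F b)"
proof -
  have "space (F a) = space M" "space (F b) = space M" "sets (F a) \<subseteq> sets (F b)"
    using assms(1-4) unfolding filtered_prob_space_def by auto
  then show ?thesis using assms(5) unfolding measurable_def by auto
qed

lemma fps_M:
  assumes "filtered_prob_space M F T" "0 \<le> a" "a \<le> T"
    and "f \<in> borel_measurable (F a)"
  shows "f \<in> borel_measurable M"
proof -
  have "space (F a) = space M" "sets (F a) \<subseteq> sets M"
    using assms(1-3) unfolding filtered_prob_space_def by auto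
  then show ?thesis using assms(4) unfolding measurable_def by auto
qed

lemma bm_W:
  assumes "brownian_motion M F T W" "0 \<le> t" "t \<le> T"
  shows "W t \<in> borel_measurable (F t)"
  using assms unfolding brownian_motion_def adapted_def by auto

lemma bm_incr:
  assumes fp: "filtered_prob_space M F T" and bm: "brownian_motion M F T W"
    and st: "0 \<le> s" "s < t" "t \<le> T"
  shows "integrable M (\<lambda>\<omega>. W t \<omega> - W s \<omega>)"
    and "integrable M (\<lambda>\<omega>. (W t \<omega> - W s \<omega>)\<^sup>2)"
    and "(\<integral>\<omega>. W t \<omega> - W s \<omega> \<partial>M) = 0"
    and "(\<integral>\<omega>. (W t \<omega> - W s \<omega>)\<^sup>2 \<partial>M) = t - s"
proof -
  interpret prob_space M using fp by (simp add: filtered_prob_space_def)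
  define sg where "sg = sqrt (t - s)"
  have sp: "0 < sg" unfolding sg_def using st by simp
  have D: "distributed M lborel (\<lambda>\<omega>. W t \<omega> - W s \<omega>) (\<lambda>x. ennreal (normal_density 0 sg x))"
    using bm st unfolding brownian_motion_def sg_def by blast
  have i1: "integrable lborel (\<lambda>x. normal_density 0 sg x * x)"
    by (rule integrable_normal_moment_nz_1[OF sp])
  show "integrable M (\<lambda>\<omega>. W t \<omega> - W s \<omega>)"
    using distributed_integrable[OF D, of "\<lambda>x. x"] i1 by simp
  have i2: "integrable lborel (\<lambda>x. normal_density 0 sg x * x\<^sup>2)"
    using integrable_normal_moment[OF sp, of 0 2] by simp
  show "integrable M (\<lambda>\<omega>. (W t \<omega> - W s \<omega>)\<^sup>2)"
    using distributed_integrable[OF D, of "\<lambda>x. x\<^sup>2"] i2 by simp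
  show "(\<integral>\<omega>. W t \<omega> - W s \<omega> \<partial>M) = 0"
    using normal_distributed_expectation[OF sp D] by simp
  have ee: "(\<integral>x. normal_density 0 sg x * (x - 0)^(2*1) \<partial>lborel) = fact (2*1) / ((2 / sg\<^sup>2)^1 * fact 1)"
    by (rule integral_normal_moment_even) (rule sp)
  have "(\<integral>x. normal_density 0 sg x * x\<^sup>2 \<partial>lborel) = sg\<^sup>2"
    using ee sp by simp
  moreover have "(\<integral>x. normal_density 0 sg x * x\<^sup>2 \<partial>lborel) = (\<integral>\<omega>. (W t \<omega> - W s \<omega>)\<^sup>2 \<partial>M)"
    by (rule distributed_integral[OF D]) auto
  ultimately show "(\<integral>\<omega>. (W t \<omega> - W s \<omega>)\<^sup>2 \<partial>M) = t - s"
    using st by (simp add: sg_def)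
qed

lemma bm_indep:
  assumes fp: "filtered_prob_space M F T" and bm: "brownian_motion M F T W"
    and st: "0 \<le> s" "s < t" "t \<le> T"
    and X: "(X :: 'a \<Rightarrow> real) \<in> borel_measurable (F s)" "integrable M X"
    and g: "(g :: real \<Rightarrow> real) \<in> borel_measurable borel" "integrable M (\<lambda>\<omega>. g (W t \<omega> - W s \<omega>))"
  shows "integrable M (\<lambda>\<omega>. X \<omega> * g (W t \<omega> - W s \<omega>))"
    and "(\<integral>\<omega>. X \<omega> * g (W t \<omega> - W s \<omega>) \<partial>M) = (\<integral>\<omega>. X \<omega> \<partial>M) * (\<integral>\<omega>. g (W t \<omega> - W s \<omega>) \<partial>M)"
proof -
  interpret prob_space M using fp by (simp add: filtered_prob_space_def)
  define D where "D = (\<lambda>\<omega>. W t \<omega> - W s \<omega>)"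
  have spF: "space (F s) = space M" and seF: "sets (F s) \<subseteq> sets M"
    using fp st unfolding filtered_prob_space_def by auto
  have Dm: "D \<in> borel_measurable M"
    using fps_M[OF fp _ _ bm_W[OF bm]] st unfolding D_def by auto
  have idm: "(\<lambda>x. x) \<in> measurable M (F s)"
    using spF seF unfolding measurable_def by auto
  have e1: "{(\<lambda>x. x) -` A \<inter> space M | A. A \<in> sets (F s)} = sets (F s)"
  proof -
    have "A \<inter> space M = A" if "A \<in> sets (F s)" for A
      using sets.sets_into_space[OF that] spF by auto
    then show ?thesis
    proof (intro set_eqI iffI)
      fix x assume "x \<in> {(\<lambda>x. x) -` A \<inter> space M | A. A \<in> sets (F s)}"
      then obtain A where "A \<in> sets (F s)" "x = A \<inter> space M" by auto
      then show "x \<in> sets (F s)" using \<open>\<And>A. A \<in> sets (F s) \<Longrightarrow> A \<inter> space M = A\<close> by auto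
    next
      fix x assume "x \<in> sets (F s)"
      then show "x \<in> {(\<lambda>x. x) -` A \<inter> space M | A. A \<in> sets (F s)}"
        using \<open>\<And>A. A \<in> sets (F s) \<Longrightarrow> A \<inter> space M = A\<close> by (intro CollectI exI[of _ x]) auto
    qed
  qed
  have ind0: "indep_set (sets (F s)) {D -` A \<inter> space M | A. A \<in> sets borel}"
    unfolding indep_sets2_eq
  proof (intro conjI ballI)
    show "sets (F s) \<subseteq> events" by (rule seF)
    show "{D -` A \<inter> space M |A. A \<in> sets borel} \<subseteq> events" using Dm by auto
    fix a b assume a: "a \<in> sets (F s)" and b: "b \<in> {D -` A \<inter> space M |A. A \<in> sets borel}"
    then obtain B where B: "B \<in> sets borel" "b = D -` B \<inter> space M" by auto
    have bb: "b = {\<omega>\<in>space M. W t \<omega> - W s \<omega> \<in> B}" using B unfolding D_def by auto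
    have "\<forall>A\<in>sets (F s). \<forall>B\<in>sets borel.
           measure M (A \<inter> {\<omega>\<in>space M. W t \<omega> - W s \<omega> \<in> B}) =
           measure M A * measure M {\<omega>\<in>space M. W t \<omega> - W s \<omega> \<in> B}"
      using bm st unfolding brownian_motion_def by blast
    then show "prob (a \<inter> b) = prob a * prob b"
      using a B(1) bb by simp
  qed
  have ind1: "indep_set (sigma_sets (space M) (sets (F s))) (sigma_sets (space M) {D -` A \<inter> space M | A. A \<in> sets borel})"
  proof (rule indep_set_sigma_sets[OF ind0])
    show "Int_stable (sets (F s))" by (auto simp: Int_stable_def)
    show "Int_stable {D -` A \<inter> space M |A. A \<in> sets borel}"
      unfolding Int_stable_def
    proof (intro ballI)
      fix a b assume "a \<in> {D -` A \<inter> space M |A. A \<in> sets borel}" "b \<in> {D -` A \<inter> space M |A. A \<in> sets borel}"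
      then obtain A B where "A \<in> sets borel" "B \<in> sets borel" "a = D -` A \<inter> space M" "b = D -` B \<inter> space M" by auto
      then show "a \<inter> b \<in> {D -` A \<inter> space M |A. A \<in> sets borel}"
        by (intro CollectI exI[of _ "A \<inter> B"]) auto
    qed
  qed
  have sFs: "sigma_sets (space M) (sets (F s)) = sets (F s)"
    using sets.sigma_sets_eq[of "F s"] spF by simp
  have Xs: "sigma_sets (space M) {X -` A \<inter> space M | A. A \<in> sets borel} \<subseteq> sets (F s)"
  proof -
    have "{X -` A \<inter> space M | A. A \<in> sets borel} \<subseteq> sets (F s)"
      using X(1) spF unfolding measurable_def by auto
    then have "sigma_sets (space M) {X -` A \<inter> space M | A. A \<in> sets borel} \<subseteq> sigma_sets (space M) (sets (F s))"
      by (rule sigma_sets_subseteq)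
    then show ?thesis using sFs by simp
  qed
  have XmM: "X \<in> borel_measurable M"
    using X(1) spF seF unfolding measurable_def by auto
  have ind: "prob_space.indep_var M borel X borel (\<lambda>\<omega>. g (D \<omega>))"
  proof -
    have "prob_space.indep_var M borel X borel D"
      unfolding indep_var_eq
    proof (intro conjI)
      show "random_variable borel X" using XmM by simp
      show "random_variable borel D" using Dm by simp
      show "indep_set (sigma_sets (space M) {X -` A \<inter> space M |A. A \<in> sets borel})
         (sigma_sets (space M) {D -` A \<inter> space M |A. A \<in> sets borel})"
        using ind1 Xs unfolding indep_sets2_eq sFs by blast
    qed
    from indep_var_compose[OF this measurable_ident_sets[OF refl] g(1)]
    show ?thesis by (simp add: comp_def)
  qed
  note ind3 = ind
  show "integrable M (\<lambda>\<omega>. X \<omega> * g (W t \<omega> - W s \<omega>))"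
    using indep_var_integrable[OF ind3 X(2)] g(2) unfolding D_def by auto
  show "(\<integral>\<omega>. X \<omega> * g (W t \<omega> - W s \<omega>) \<partial>M) = (\<integral>\<omega>. X \<omega> \<partial>M) * (\<integral>\<omega>. g (W t \<omega> - W s \<omega>) \<partial>M)"
    using indep_var_lebesgue_integral[OF ind3 X(2)] g(2) unfolding D_def by auto
qed

lemma meas_term:
  assumes fp: "filtered_prob_space M F T" and bm: "brownian_motion M F T W"
    and uv: "0 \<le> u" "u \<le> v" "v \<le> b" "b \<le> T"
    and a: "u < v \<Longrightarrow> a \<in> borel_measurable (F u)"
  shows "(\<lambda>\<omega>. a \<omega> * (W v \<omega> - W u \<omega>)) \<in> borel_measurable (F b)"
proof (cases "u = v")
  case True
  then show ?thesis by simp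
next
  case False
  then have "u < v" using uv by simp
  have 1: "a \<in> borel_measurable (F b)"
    using fps_sub[OF fp _ _ _ a[OF \<open>u < v\<close>]] uv by simp
  have 2: "W v \<in> borel_measurable (F b)"
    using fps_sub[OF fp _ _ _ bm_W[OF bm]] uv by simp
  have 3: "W u \<in> borel_measurable (F b)"
    using fps_sub[OF fp _ _ _ bm_W[OF bm]] uv by simp
  show ?thesis using 1 2 3 by measurable
qed

lemma meas_sum:
  assumes fp: "filtered_prob_space M F T" and bm: "brownian_motion M F T W"
    and uv: "\<And>i. i < m \<Longrightarrow> 0 \<le> u i \<and> u i \<le> v i \<and> v i \<le> b" and "b \<le> T"
    and a: "\<And>i. i < m \<Longrightarrow> u i < v i \<Longrightarrow> a i \<in> borel_measurable (F (u i))"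
  shows "(\<lambda>\<omega>. \<Sum>i<m. a i \<omega> * (W (v i) \<omega> - W (u i) \<omega>)) \<in> borel_measurable (F b)"
proof (rule borel_measurable_sum)
  fix i assume "i \<in> {..<m}"
  then show "(\<lambda>\<omega>. a i \<omega> * (W (v i) \<omega> - W (u i) \<omega>)) \<in> borel_measurable (F b)"
    using meas_term[OF fp bm _ _ _ \<open>b \<le> T\<close>, of "u i" "v i" "a i"] uv a by auto
qed

lemma isometry:
  fixes m :: nat and a :: "nat \<Rightarrow> 'a \<Rightarrow> real"
  assumes fp: "filtered_prob_space M F T" and bm: "brownian_motion M F T W"
    and uv: "\<And>i. i < m \<Longrightarrow> 0 \<le> u i \<and> u i \<le> v i \<and> v i \<le> T"
    and ord: "\<And>i j. i < j \<Longrightarrow> j < m \<Longrightarrow> v i \<le> u j"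
    and a: "\<And>i. i < m \<Longrightarrow> u i < v i \<Longrightarrow> a i \<in> borel_measurable (F (u i))"
    and bnd: "\<And>i. i < m \<Longrightarrow> \<exists>C. \<forall>\<omega>\<in>space M. \<bar>a i \<omega>\<bar> \<le> C"
  shows "integrable M (\<lambda>\<omega>. (\<Sum>i<m. a i \<omega> * (W (v i) \<omega> - W (u i) \<omega>))\<^sup>2) \<and>
    (\<integral>\<omega>. (\<Sum>i<m. a i \<omega> * (W (v i) \<omega> - W (u i) \<omega>))\<^sup>2 \<partial>M) =
    (\<Sum>i<m. (\<integral>\<omega>. (a i \<omega>)\<^sup>2 \<partial>M) * (v i - u i))"
  using uv ord a bnd
proof (induction m)
  case 0
  interpret prob_space M using fp by (simp add: filtered_prob_space_def)
  show ?case by simp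
next
  case (Suc m)
  interpret prob_space M using fp by (simp add: filtered_prob_space_def)
  define S where "S = (\<lambda>\<omega>. \<Sum>i<m. a i \<omega> * (W (v i) \<omega> - W (u i) \<omega>))"
  have IH: "integrable M (\<lambda>\<omega>. (S \<omega>)\<^sup>2) \<and> (\<integral>\<omega>. (S \<omega>)\<^sup>2 \<partial>M) = (\<Sum>i<m. (\<integral>\<omega>. (a i \<omega>)\<^sup>2 \<partial>M) * (v i - u i))"
    unfolding S_def using Suc.prems by (intro Suc.IH) auto
  have split: "(\<lambda>\<omega>. \<Sum>i<Suc m. a i \<omega> * (W (v i) \<omega> - W (u i) \<omega>)) = (\<lambda>\<omega>. S \<omega> + a m \<omega> * (W (v m) \<omega> - W (u m) \<omega>))"
    unfolding S_def by simp
  have um: "0 \<le> u m" "u m \<le> v m" "v m \<le> T" using Suc.prems(1)[of m] by auto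
  show ?case
  proof (cases "u m = v m")
    case True
    then show ?thesis unfolding split using IH by (simp add: S_def)
  next
    case False
    then have lt: "u m < v m" using um by simp
    obtain C where C: "\<forall>\<omega>\<in>space M. \<bar>a m \<omega>\<bar> \<le> C" using Suc.prems(4)[of m] by auto
    have Sm: "S \<in> borel_measurable (F (u m))"
      unfolding S_def
    proof (rule meas_sum[OF fp bm])
      fix i assume "i < m"
      then show "0 \<le> u i \<and> u i \<le> v i \<and> v i \<le> u m"
        using Suc.prems(1)[of i] Suc.prems(2)[of i m] by auto
      show "i < m \<Longrightarrow> u i < v i \<Longrightarrow> a i \<in> borel_measurable (F (u i))"
        using Suc.prems(3)[of i] by auto
    next
      show "u m \<le> T" using um by simp
    qed
    have am: "a m \<in> borel_measurable (F (u m))" using Suc.prems(3)[of m] lt by simp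
    have SM: "S \<in> borel_measurable M" using fps_M[OF fp _ _ Sm] um by simp
    have aM: "a m \<in> borel_measurable M" using fps_M[OF fp _ _ am] um by simp
    have int_Sa: "integrable M (\<lambda>\<omega>. S \<omega> * a m \<omega>)"
    proof (rule Bochner_Integration.integrable_bound[where f="\<lambda>\<omega>. \<bar>C\<bar> * (1 + (S \<omega>)\<^sup>2)"])
      show "integrable M (\<lambda>\<omega>. \<bar>C\<bar> * (1 + (S \<omega>)\<^sup>2))"
        using IH by (intro integrable_mult_right integrable_add) auto
      show "(\<lambda>\<omega>. S \<omega> * a m \<omega>) \<in> borel_measurable M" using SM aM by measurable
      show "AE \<omega> in M. norm (S \<omega> * a m \<omega>) \<le> norm (\<bar>C\<bar> * (1 + (S \<omega>)\<^sup>2))"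
      proof (rule AE_I2)
        fix \<omega> assume w: "\<omega> \<in> space M"
        have h1: "0 \<le> (\<bar>S \<omega>\<bar> - 1)\<^sup>2" by simp
        have h2: "(\<bar>S \<omega>\<bar> - 1)\<^sup>2 = (S \<omega>)\<^sup>2 + 1 - 2 * \<bar>S \<omega>\<bar>"
          by (simp add: power2_diff)
        have "\<bar>S \<omega>\<bar> \<le> 1 + (S \<omega>)\<^sup>2"
          using h1 h2 by linarith
        moreover have "\<bar>a m \<omega>\<bar> \<le> \<bar>C\<bar>" using C w by force
        ultimately have "\<bar>S \<omega>\<bar> * \<bar>a m \<omega>\<bar> \<le> (1 + (S \<omega>)\<^sup>2) * \<bar>C\<bar>"
          by (intro mult_mono) auto
        then show "norm (S \<omega> * a m \<omega>) \<le> norm (\<bar>C\<bar> * (1 + (S \<omega>)\<^sup>2))"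
          by (simp add: abs_mult mult.commute)
      qed
    qed
    have int_a2: "integrable M (\<lambda>\<omega>. (a m \<omega>)\<^sup>2)"
    proof (rule Bochner_Integration.integrable_bound[where f="\<lambda>\<omega>. C\<^sup>2"])
      show "integrable M (\<lambda>\<omega>. C\<^sup>2)" by simp
      show "(\<lambda>\<omega>. (a m \<omega>)\<^sup>2) \<in> borel_measurable M" using aM by measurable
      show "AE \<omega> in M. norm ((a m \<omega>)\<^sup>2) \<le> norm (C\<^sup>2)"
      proof (rule AE_I2)
        fix \<omega> assume w: "\<omega> \<in> space M"
        have "\<bar>a m \<omega>\<bar> \<le> C" using C w by blast
        then have "\<bar>a m \<omega>\<bar>\<^sup>2 \<le> C\<^sup>2" by (intro power_mono) auto
        then show "norm ((a m \<omega>)\<^sup>2) \<le> norm (C\<^sup>2)" by simp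
      qed
    qed
    have Sam: "(\<lambda>\<omega>. S \<omega> * a m \<omega>) \<in> borel_measurable (F (u m))" using Sm am by measurable
    have a2m: "(\<lambda>\<omega>. (a m \<omega>)\<^sup>2) \<in> borel_measurable (F (u m))" using am by measurable
    note I1 = bm_incr[OF fp bm um(1) lt um(3)]
    have X1: "integrable M (\<lambda>\<omega>. S \<omega> * a m \<omega> * (W (v m) \<omega> - W (u m) \<omega>))"
      "(\<integral>\<omega>. S \<omega> * a m \<omega> * (W (v m) \<omega> - W (u m) \<omega>) \<partial>M) = 0"
      using bm_indep[OF fp bm um(1) lt um(3) Sam int_Sa, of "\<lambda>x. x"] I1 by auto
    have X2: "integrable M (\<lambda>\<omega>. (a m \<omega>)\<^sup>2 * (W (v m) \<omega> - W (u m) \<omega>)\<^sup>2)"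
      "(\<integral>\<omega>. (a m \<omega>)\<^sup>2 * (W (v m) \<omega> - W (u m) \<omega>)\<^sup>2 \<partial>M) = (\<integral>\<omega>. (a m \<omega>)\<^sup>2 \<partial>M) * (v m - u m)"
      using bm_indep[OF fp bm um(1) lt um(3) a2m int_a2, of "\<lambda>x. x\<^sup>2"] I1 by auto
    have eq: "(\<lambda>\<omega>. (S \<omega> + a m \<omega> * (W (v m) \<omega> - W (u m) \<omega>))\<^sup>2) =
      (\<lambda>\<omega>. ((S \<omega>)\<^sup>2 + 2 * (S \<omega> * a m \<omega> * (W (v m) \<omega> - W (u m) \<omega>))) + (a m \<omega>)\<^sup>2 * (W (v m) \<omega> - W (u m) \<omega>)\<^sup>2)"
      by (auto simp: power2_eq_square algebra_simps)
    have int: "integrable M (\<lambda>\<omega>. ((S \<omega>)\<^sup>2 + 2 * (S \<omega> * a m \<omega> * (W (v m) \<omega> - W (u m) \<omega>))) + (a m \<omega>)\<^sup>2 * (W (v m) \<omega> - W (u m) \<omega>)\<^sup>2)"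
    proof -
      have i0: "integrable M (\<lambda>\<omega>. (S \<omega>)\<^sup>2)" using IH by simp
      have i1: "integrable M (\<lambda>\<omega>. 2 * (S \<omega> * a m \<omega> * (W (v m) \<omega> - W (u m) \<omega>)))"
        using X1(1) by (rule integrable_mult_right)
      show ?thesis by (rule Bochner_Integration.integrable_add[OF Bochner_Integration.integrable_add[OF i0 i1] X2(1)])
    qed
    have "(\<integral>\<omega>. ((S \<omega>)\<^sup>2 + 2 * (S \<omega> * a m \<omega> * (W (v m) \<omega> - W (u m) \<omega>))) + (a m \<omega>)\<^sup>2 * (W (v m) \<omega> - W (u m) \<omega>)\<^sup>2 \<partial>M)
       = (\<integral>\<omega>. (S \<omega>)\<^sup>2 \<partial>M) + 2 * (\<integral>\<omega>. S \<omega> * a m \<omega> * (W (v m) \<omega> - W (u m) \<omega>) \<partial>M) + (\<integral>\<omega>. (a m \<omega>)\<^sup>2 * (W (v m) \<omega> - W (u m) \<omega>)\<^sup>2 \<partial>M)"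
    proof -
      have i0: "integrable M (\<lambda>\<omega>. (S \<omega>)\<^sup>2)" using IH by simp
      have i1: "integrable M (\<lambda>\<omega>. 2 * (S \<omega> * a m \<omega> * (W (v m) \<omega> - W (u m) \<omega>)))"
        using X1(1) by (rule integrable_mult_right)
      show ?thesis
        using Bochner_Integration.integral_add[OF Bochner_Integration.integrable_add[OF i0 i1] X2(1)]
          Bochner_Integration.integral_add[OF i0 i1] by simp
    qed
    moreover have fin: "(\<lambda>\<omega>. (\<Sum>i<Suc m. a i \<omega> * (W (v i) \<omega> - W (u i) \<omega>))\<^sup>2) = (\<lambda>\<omega>. (S \<omega> + a m \<omega> * (W (v m) \<omega> - W (u m) \<omega>))\<^sup>2)"
      unfolding S_def by simp
    ultimately show ?thesis unfolding fin eq using int IH X1(2) X2(2) by simp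
  qed
qed

lemma sum_single_nz:
  assumes "finite A" "k \<in> A" "\<And>i. i \<in> A \<Longrightarrow> i \<noteq> k \<Longrightarrow> f i = 0"
  shows "sum f A = f k"
proof -
  have "sum f A = f k + sum f (A - {k})" using assms(1,2) by (simp add: sum.remove)
  also have "sum f (A - {k}) = 0" using assms(3) by (intro sum.neutral) auto
  finally show ?thesis by simp
qed

lemma adm_facts:
  assumes "simple_admissible M F T ts h"
  shows "\<And>i. i < length ts \<Longrightarrow> 0 \<le> ts ! i \<and> ts ! i \<le> T"
    and "\<And>i j. i < j \<Longrightarrow> j < length ts \<Longrightarrow> ts ! i < ts ! j"
    and "\<And>i j. i \<le> j \<Longrightarrow> j < length ts \<Longrightarrow> ts ! i \<le> ts ! j"
    and "\<And>i. i < length ts - 1 \<Longrightarrow> h i \<in> borel_measurable (F (ts ! i))"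
    and "\<And>i. i < length ts - 1 \<Longrightarrow> \<exists>C. \<forall>\<omega>\<in>space M. \<bar>h i \<omega>\<bar> \<le> C"
    and "2 \<le> length ts"
proof -
  have s: "sorted_wrt (<) ts" and l: "length ts \<ge> 2" and z: "ts ! 0 = 0" and la: "last ts = T"
    using assms unfolding simple_admissible_def by auto
  show lt: "\<And>i j. i < j \<Longrightarrow> j < length ts \<Longrightarrow> ts ! i < ts ! j"
    using sorted_wrt_nth_less[OF s] by blast
  show le: "\<And>i j. i \<le> j \<Longrightarrow> j < length ts \<Longrightarrow> ts ! i \<le> ts ! j"
    using lt by (metis order.order_iff_strict)
  have ne: "ts \<noteq> []" using l by auto
  have lT: "ts ! (length ts - 1) = T" using la last_conv_nth[OF ne] by simp
  show "\<And>i. i < length ts \<Longrightarrow> 0 \<le> ts ! i \<and> ts ! i \<le> T"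
  proof -
    fix i assume i: "i < length ts"
    have "ts ! 0 \<le> ts ! i" using le[of 0 i] i by simp
    moreover have "ts ! i \<le> ts ! (length ts - 1)" using le[of i "length ts - 1"] i by simp
    ultimately show "0 \<le> ts ! i \<and> ts ! i \<le> T" using z lT by simp
  qed
  show "\<And>i. i < length ts - 1 \<Longrightarrow> h i \<in> borel_measurable (F (ts ! i))"
    "\<And>i. i < length ts - 1 \<Longrightarrow> \<exists>C. \<forall>\<omega>\<in>space M. \<bar>h i \<omega>\<bar> \<le> C"
    using assms unfolding simple_admissible_def by auto
  show "2 \<le> length ts" by (rule l)
qed

lemma iv_disj:
  assumes "simple_admissible M F T ts h" "i < length ts - 1" "j < length ts - 1"
    "s \<in> {ts ! i <.. ts ! Suc i}" "s \<in> {ts ! j <.. ts ! Suc j}"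
  shows "i = j"
proof (rule ccontr)
  assume "i \<noteq> j"
  then consider "i < j" | "j < i" by linarith
  then show False
  proof cases
    case 1
    then have "ts ! Suc i \<le> ts ! j" using adm_facts(3)[OF assms(1), of "Suc i" j] assms(3) by simp
    then show False using assms(4,5) by auto
  next
    case 2
    then have "ts ! Suc j \<le> ts ! i" using adm_facts(3)[OF assms(1), of "Suc j" i] assms(2) by simp
    then show False using assms(4,5) by auto
  qed
qed

lemma sp_at:
  assumes "simple_admissible M F T ts h" "k < length ts - 1" "s \<in> {ts ! k <.. ts ! Suc k}"
  shows "simple_process ts h s \<omega> = h k \<omega>"
proof -
  have "simple_process ts h s \<omega> = h k \<omega> * indicator {ts ! k <.. ts ! Suc k} s"
    unfolding simple_process_def
  proof (rule sum_single_nz)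
    fix i assume "i \<in> {..<length ts - 1}" "i \<noteq> k"
    then have "s \<notin> {ts ! i <.. ts ! Suc i}" using iv_disj[OF assms(1) _ assms(2) _ assms(3), of i] by auto
    then show "h i \<omega> * indicator {ts ! i<..ts ! Suc i} s = 0" by simp
  qed (use assms in auto)
  then show ?thesis using assms(3) by simp
qed

lemma sigma_section:
  assumes fp: "filtered_prob_space M F T" and pm: "progressively_measurable F T \<sigma>"
    and T: "0 \<le> T" and w: "\<omega> \<in> space M"
  shows "(\<lambda>s. indicator {0..T} s * \<sigma> s \<omega>) \<in> borel_measurable lborel"
proof -
  have j: "(\<lambda>(s, \<omega>). \<sigma> s \<omega>) \<in> borel_measurable (restrict_space lborel {0..T} \<Otimes>\<^sub>M F T)"
    using pm T unfolding progressively_measurable_def by auto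
  have wF: "\<omega> \<in> space (F T)" using fp T w unfolding filtered_prob_space_def by auto
  have "(\<lambda>s. (s, \<omega>)) \<in> measurable (restrict_space lborel {0..T}) (restrict_space lborel {0..T} \<Otimes>\<^sub>M F T)"
    by (rule measurable_Pair2'[OF wF])
  from measurable_comp[OF this j]
  have "(\<lambda>s. \<sigma> s \<omega>) \<in> borel_measurable (restrict_space lborel {0..T})"
    by (simp add: comp_def)
  then show ?thesis
    using borel_measurable_restrict_space_iff[of "{0..T}" lborel "\<lambda>s. \<sigma> s \<omega>"] by simp
qed

lemma tail_bound:
  assumes adm: "simple_admissible M F T ts h" and fp: "filtered_prob_space M F T"
    and pm: "progressively_measurable F T \<sigma>"
    and B: "\<And>s \<omega>. s \<in> {0..T} \<Longrightarrow> \<omega> \<in> space M \<Longrightarrow> \<bar>\<sigma> s \<omega>\<bar> \<le> B"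
    and t: "0 \<le> t" "t \<le> T" and w: "\<omega> \<in> space M"
  shows "ennreal (\<Sum>i<length ts - 1. (h i \<omega>)\<^sup>2 * (max (ts ! Suc i) t - max (ts ! i) t))
    \<le> 2 * (\<integral>\<^sup>+ s\<in>{0..T}. ennreal ((simple_process ts h s \<omega> - \<sigma> s \<omega>)\<^sup>2) \<partial>lborel) + ennreal (2 * B\<^sup>2 * (T - t))"
proof -
  define K where "K = length ts - 1"
  define u where "u i = max (ts ! i) t" for i
  define v where "v i = max (ts ! Suc i) t" for i
  define J where "J i = {u i <.. v i}" for i
  define sg where "sg s = indicator {0..T} s * \<sigma> s \<omega>" for s
  define sp where "sp s = simple_process ts h s \<omega>" for s
  note af = adm_facts[OF adm]
  have uv: "u i \<le> v i" if "i < K" for i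
  proof -
    have "ts ! i < ts ! Suc i" using af(2)[of i "Suc i"] that unfolding K_def by auto
    then show ?thesis unfolding u_def v_def by auto
  qed
  have sgm: "sg \<in> borel_measurable lborel"
    unfolding sg_def using sigma_section[OF fp pm _ w] t by simp
  have spm: "sp \<in> borel_measurable lborel"
    unfolding sp_def simple_process_def by measurable
  have pw: "(\<Sum>i<K. ennreal ((h i \<omega>)\<^sup>2) * indicator (J i) s)
      \<le> ennreal (2 * (sp s - sg s)\<^sup>2 * indicator {0..T} s) + ennreal (2 * B\<^sup>2 * indicator {t<..T} s)" for s
  proof (cases "\<exists>k<K. s \<in> J k")
    case True
    then obtain k where k: "k < K" "s \<in> J k" by auto
    have sk: "s \<in> {ts ! k <.. ts ! Suc k}" "t < s" "s \<le> T"
    proof -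
      have "ts ! Suc k \<le> T" using af(1)[of "Suc k"] k(1) unfolding K_def by auto
      moreover have "t < s" "ts ! k < s" "s \<le> max (ts ! Suc k) t" using k(2) unfolding J_def u_def v_def by auto
      ultimately show "s \<in> {ts ! k <.. ts ! Suc k}" "t < s" "s \<le> T" by auto
    qed
    have s0T: "s \<in> {0..T}" using sk t by auto
    have Jsub: "J i \<subseteq> {ts ! i <.. ts ! Suc i}" if "i < K" for i
      using that unfolding J_def u_def v_def by auto
    have "(\<Sum>i<K. ennreal ((h i \<omega>)\<^sup>2) * indicator (J i) s) = ennreal ((h k \<omega>)\<^sup>2) * indicator (J k) s"
    proof (rule sum_single_nz)
      fix i assume i: "i \<in> {..<K}" "i \<noteq> k"
      have "s \<notin> J i"
      proof
        assume "s \<in> J i"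
        then have si: "s \<in> {ts ! i <.. ts ! Suc i}" using Jsub[of i] i by auto
        have "i = k" using iv_disj[OF adm _ _ si sk(1)] i k unfolding K_def by auto
        then show False using i by simp
      qed
      then show "ennreal ((h i \<omega>)\<^sup>2) * indicator (J i) s = 0" by simp
    qed (use k in auto)
    also have "\<dots> = ennreal ((h k \<omega>)\<^sup>2)" using k by simp
    also have "\<dots> \<le> ennreal (2 * (sp s - sg s)\<^sup>2 * indicator {0..T} s + 2 * B\<^sup>2 * indicator {t<..T} s)"
    proof (rule ennreal_leI)
      have spk: "sp s = h k \<omega>" unfolding sp_def using sp_at[OF adm _ sk(1)] k(1) unfolding K_def by simp
      have sgs: "sg s = \<sigma> s \<omega>" unfolding sg_def using s0T by simp
      have "\<bar>\<sigma> s \<omega>\<bar> \<le> B" using B[OF s0T w] .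
      then have "(\<sigma> s \<omega>)\<^sup>2 \<le> B\<^sup>2"
        by (metis abs_le_square_iff abs_of_nonneg abs_ge_zero order_trans)
      moreover have "(h k \<omega>)\<^sup>2 \<le> 2 * (h k \<omega> - \<sigma> s \<omega>)\<^sup>2 + 2 * (\<sigma> s \<omega>)\<^sup>2"
      proof -
        have "0 \<le> (h k \<omega> - 2 * \<sigma> s \<omega>)\<^sup>2" by simp
        then show ?thesis by (simp add: power2_eq_square algebra_simps)
      qed
      ultimately show "(h k \<omega>)\<^sup>2 \<le> 2 * (sp s - sg s)\<^sup>2 * indicator {0..T} s + 2 * B\<^sup>2 * indicator {t<..T} s"
        using spk sgs s0T sk(2,3) by simp
    qed
    also have "\<dots> = ennreal (2 * (sp s - sg s)\<^sup>2 * indicator {0..T} s) + ennreal (2 * B\<^sup>2 * indicator {t<..T} s)"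
      by (intro ennreal_plus) auto
    finally show ?thesis .
  next
    case False
    then have "(\<Sum>i<K. ennreal ((h i \<omega>)\<^sup>2) * indicator (J i) s) = 0"
      by (intro sum.neutral) auto
    then show ?thesis by simp
  qed
  have "ennreal (\<Sum>i<K. (h i \<omega>)\<^sup>2 * (v i - u i)) = (\<Sum>i<K. ennreal ((h i \<omega>)\<^sup>2 * (v i - u i)))"
    using uv by (intro sum_ennreal[symmetric]) auto
  also have "\<dots> = (\<Sum>i<K. \<integral>\<^sup>+ s. ennreal ((h i \<omega>)\<^sup>2) * indicator (J i) s \<partial>lborel)"
  proof (intro sum.cong refl)
    fix i assume "i \<in> {..<K}"
    then have "u i \<le> v i" using uv by simp
    then show "ennreal ((h i \<omega>)\<^sup>2 * (v i - u i)) = (\<integral>\<^sup>+ s. ennreal ((h i \<omega>)\<^sup>2) * indicator (J i) s \<partial>lborel)"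
      unfolding J_def by (subst nn_integral_cmult_indicator) (auto simp: ennreal_mult)
  qed
  also have "\<dots> = (\<integral>\<^sup>+ s. (\<Sum>i<K. ennreal ((h i \<omega>)\<^sup>2) * indicator (J i) s) \<partial>lborel)"
    by (rule nn_integral_sum[symmetric]) (auto simp: J_def)
  also have "\<dots> \<le> (\<integral>\<^sup>+ s. ennreal (2 * (sp s - sg s)\<^sup>2 * indicator {0..T} s) + ennreal (2 * B\<^sup>2 * indicator {t<..T} s) \<partial>lborel)"
    by (rule nn_integral_mono) (rule pw)
  also have "\<dots> = (\<integral>\<^sup>+ s. ennreal (2 * (sp s - sg s)\<^sup>2 * indicator {0..T} s) \<partial>lborel) + (\<integral>\<^sup>+ s. ennreal (2 * B\<^sup>2 * indicator {t<..T} s) \<partial>lborel)"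
    using spm sgm by (intro nn_integral_add) auto
  also have "(\<integral>\<^sup>+ s. ennreal (2 * B\<^sup>2 * indicator {t<..T} s) \<partial>lborel) = ennreal (2 * B\<^sup>2 * (T - t))"
  proof -
    have "(\<integral>\<^sup>+ s. ennreal (2 * B\<^sup>2 * indicator {t<..T} s) \<partial>lborel) = (\<integral>\<^sup>+ s. ennreal (2 * B\<^sup>2) * indicator {t<..T} s \<partial>lborel)"
      by (intro nn_integral_cong) (auto simp: indicator_def)
    also have "\<dots> = ennreal (2 * B\<^sup>2) * ennreal (T - t)"
      using t by (subst nn_integral_cmult_indicator) auto
    also have "\<dots> = ennreal (2 * B\<^sup>2 * (T - t))"
      using t by (intro ennreal_mult[symmetric]) auto
    finally show ?thesis .
  qed
  also have "(\<integral>\<^sup>+ s. ennreal (2 * (sp s - sg s)\<^sup>2 * indicator {0..T} s) \<partial>lborel)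
      = 2 * (\<integral>\<^sup>+ s\<in>{0..T}. ennreal ((simple_process ts h s \<omega> - \<sigma> s \<omega>)\<^sup>2) \<partial>lborel)"
  proof -
    have "(\<integral>\<^sup>+ s. ennreal (2 * (sp s - sg s)\<^sup>2 * indicator {0..T} s) \<partial>lborel)
       = (\<integral>\<^sup>+ s. 2 * (ennreal ((simple_process ts h s \<omega> - \<sigma> s \<omega>)\<^sup>2) * indicator {0..T} s) \<partial>lborel)"
      by (intro nn_integral_cong) (auto simp: indicator_def sp_def sg_def ennreal_mult)
    also have "\<dots> = 2 * (\<integral>\<^sup>+ s. ennreal ((simple_process ts h s \<omega> - \<sigma> s \<omega>)\<^sup>2) * indicator {0..T} s \<partial>lborel)"
    proof (rule nn_integral_cmult)
      have "(\<lambda>s. ennreal ((sp s - sg s)\<^sup>2) * indicator {0..T} s) \<in> borel_measurable lborel"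
        using spm sgm by measurable
      moreover have "(\<lambda>s. ennreal ((sp s - sg s)\<^sup>2) * indicator {0..T} s) = (\<lambda>s. ennreal ((simple_process ts h s \<omega> - \<sigma> s \<omega>)\<^sup>2) * indicator {0..T} s)"
        by (auto simp: indicator_def sp_def sg_def fun_eq_iff)
      ultimately show "(\<lambda>s. ennreal ((simple_process ts h s \<omega> - \<sigma> s \<omega>)\<^sup>2) * indicator {0..T} s) \<in> borel_measurable lborel" by simp
    qed
    finally show ?thesis by simp
  qed
  finally show ?thesis unfolding K_def u_def v_def .
qed

lemma G_meas:
  assumes fp: "filtered_prob_space M F T" and pm: "progressively_measurable F T \<sigma>"
    and T: "0 \<le> T" and adm: "simple_admissible M F T ts h"
  shows "(\<lambda>\<omega>. \<integral>\<^sup>+ s\<in>{0..T}. ennreal ((simple_process ts h s \<omega> - \<sigma> s \<omega>)\<^sup>2) \<partial>lborel) \<in> borel_measurable M"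
proof -
  define R where "R = restrict_space lborel {0..T::real}"
  interpret R: sigma_finite_measure R
    unfolding R_def by (rule sigma_finite_measure_restrict_space[OF lborel.sigma_finite_measure_axioms]) simp
  have eq: "(\<integral>\<^sup>+ s\<in>{0..T}. ennreal ((simple_process ts h s \<omega> - \<sigma> s \<omega>)\<^sup>2) \<partial>lborel)
      = (\<integral>\<^sup>+ s. ennreal ((simple_process ts h s \<omega> - \<sigma> s \<omega>)\<^sup>2) \<partial>R)" for \<omega>
    unfolding R_def by (subst nn_integral_restrict_space) auto
  have j: "(\<lambda>(s, \<omega>). \<sigma> s \<omega>) \<in> borel_measurable (R \<Otimes>\<^sub>M F T)"
    using pm T unfolding progressively_measurable_def R_def by auto
  have j2: "(\<lambda>(\<omega>, s). \<sigma> s \<omega>) \<in> borel_measurable (F T \<Otimes>\<^sub>M R)"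
    using measurable_pair_swap_iff[of "\<lambda>(\<omega>, s). \<sigma> s \<omega>" "F T" R borel] j by simp
  have idMF: "(\<lambda>x. x) \<in> measurable M (F T)"
  proof -
    have a: "space (F T) = space M" "sets (F T) \<subseteq> sets M"
      using fp T unfolding filtered_prob_space_def by auto
    have "y \<inter> space M = y" if "y \<in> sets (F T)" for y
      using sets.sets_into_space[OF that] a by auto
    then show ?thesis using a unfolding measurable_def by auto
  qed
  have idm: "(\<lambda>x. x) \<in> measurable (M \<Otimes>\<^sub>M R) (F T \<Otimes>\<^sub>M R)"
    unfolding measurable_pair_iff
    using measurable_comp[OF measurable_fst idMF] measurable_snd by (simp add: comp_def)
  have sm: "(\<lambda>(\<omega>, s). \<sigma> s \<omega>) \<in> borel_measurable (M \<Otimes>\<^sub>M R)"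
    using measurable_comp[OF idm j2] by (simp add: comp_def)
  have hm: "h i \<in> borel_measurable M" if "i < length ts - 1" for i
    using fps_M[OF fp _ _ adm_facts(4)[OF adm that]] adm_facts(1)[OF adm, of i] that by auto
  have im: "(\<lambda>s. indicator {a<..b} s :: real) \<in> borel_measurable R" for a b :: real
    unfolding R_def by (rule measurable_restrict_space1) simp
  have spm: "(\<lambda>(\<omega>, s). simple_process ts h s \<omega>) \<in> borel_measurable (M \<Otimes>\<^sub>M R)"
    unfolding simple_process_def split_beta'
  proof (rule borel_measurable_sum)
    fix i assume "i \<in> {..<length ts - 1}"
    then have "(\<lambda>x. h i (fst x)) \<in> borel_measurable (M \<Otimes>\<^sub>M R)"
      using measurable_comp[OF measurable_fst hm[of i]] by (simp add: comp_def)
    moreover have "(\<lambda>x. indicator {ts ! i<..ts ! Suc i} (snd x) :: real) \<in> borel_measurable (M \<Otimes>\<^sub>M R)"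
      using measurable_comp[OF measurable_snd im] by (simp add: comp_def)
    ultimately show "(\<lambda>x. h i (fst x) * indicator {ts ! i<..ts ! Suc i} (snd x)) \<in> borel_measurable (M \<Otimes>\<^sub>M R)"
      by (rule borel_measurable_times)
  qed
  have fm: "(\<lambda>(\<omega>, s). ennreal ((simple_process ts h s \<omega> - \<sigma> s \<omega>)\<^sup>2)) \<in> borel_measurable (M \<Otimes>\<^sub>M R)"
    using spm sm unfolding split_beta' by measurable
  have "(\<lambda>\<omega>. \<integral>\<^sup>+ s. ennreal ((simple_process ts h s \<omega> - \<sigma> s \<omega>)\<^sup>2) \<partial>R) \<in> borel_measurable M"
    using R.borel_measurable_nn_integral[OF fm] .
  then show ?thesis unfolding eq .
qed

lemma two_ennreal: "0 \<le> x \<Longrightarrow> 2 * ennreal x = ennreal (2 * x)"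
  by (simp add: ennreal_mult)

lemma bounded_sq_int:
  fixes f :: "'a \<Rightarrow> real"
  assumes "prob_space M" "f \<in> borel_measurable M" "\<forall>\<omega>\<in>space M. \<bar>f \<omega>\<bar> \<le> C"
  shows "integrable M (\<lambda>\<omega>. (f \<omega>)\<^sup>2)"
proof -
  interpret prob_space M by fact
  show ?thesis
  proof (rule Bochner_Integration.integrable_bound[where f="\<lambda>\<omega>. C\<^sup>2"])
    show "integrable M (\<lambda>\<omega>. C\<^sup>2)" by simp
    show "(\<lambda>\<omega>. (f \<omega>)\<^sup>2) \<in> borel_measurable M" using assms(2) by measurable
    show "AE \<omega> in M. norm ((f \<omega>)\<^sup>2) \<le> norm (C\<^sup>2)"
    proof (rule AE_I2)
      fix \<omega> assume w: "\<omega> \<in> space M"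
      have "\<bar>f \<omega>\<bar> \<le> C" using assms(3) w by blast
      then have "\<bar>f \<omega>\<bar>\<^sup>2 \<le> C\<^sup>2" by (intro power_mono) auto
      then show "norm ((f \<omega>)\<^sup>2) \<le> norm (C\<^sup>2)" by simp
    qed
  qed
qed

lemma approx:
  assumes fp: "filtered_prob_space M F T" and bm: "brownian_motion M F T W"
    and pm: "progressively_measurable F T \<sigma>"
    and B: "\<And>s \<omega>. s \<in> {0..T} \<Longrightarrow> \<omega> \<in> space M \<Longrightarrow> \<bar>\<sigma> s \<omega>\<bar> \<le> B"
    and ito: "ito_integral_is M F T W \<sigma> \<xi>"
    and t: "0 \<le> t" "t \<le> T" and e: "0 < \<epsilon>"
  shows "\<exists>Y. Y \<in> borel_measurable (F t) \<and> integrable M (\<lambda>\<omega>. (Y \<omega>)\<^sup>2) \<and>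
    (\<integral>\<^sup>+\<omega>. ennreal ((\<xi> \<omega> - Y \<omega>)\<^sup>2) \<partial>M) \<le> ennreal (4 * B\<^sup>2 * (T - t) + \<epsilon>)"
proof -
  interpret prob_space M using fp by (simp add: filtered_prob_space_def)
  obtain ts h where xim: "\<xi> \<in> borel_measurable M"
    and adm: "\<And>n. simple_admissible M F T (ts n) (h n)"
    and L1: "(\<lambda>n. \<integral>\<^sup>+ \<omega>. (\<integral>\<^sup>+ t\<in>{0..T}. ennreal ((simple_process (ts n) (h n) t \<omega> - \<sigma> t \<omega>)\<^sup>2) \<partial>lborel) \<partial>M)
           \<longlonglongrightarrow> 0"
    and L2: "(\<lambda>n. \<integral>\<^sup>+ \<omega>. ennreal ((simple_integral W (ts n) (h n) \<omega> - \<xi> \<omega>)\<^sup>2) \<partial>M) \<longlonglongrightarrow> 0"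
    using ito unfolding ito_integral_is_def by blast
  have ev1: "eventually (\<lambda>n. (\<integral>\<^sup>+ \<omega>. (\<integral>\<^sup>+ t\<in>{0..T}. ennreal ((simple_process (ts n) (h n) t \<omega> - \<sigma> t \<omega>)\<^sup>2) \<partial>lborel) \<partial>M) < ennreal (\<epsilon> / 8)) sequentially"
    by (rule order_tendstoD(2)[OF L1]) (use e in simp)
  have ev2: "eventually (\<lambda>n. (\<integral>\<^sup>+ \<omega>. ennreal ((simple_integral W (ts n) (h n) \<omega> - \<xi> \<omega>)\<^sup>2) \<partial>M) < ennreal (\<epsilon> / 4)) sequentially"
    by (rule order_tendstoD(2)[OF L2]) (use e in simp)
  obtain n where
    n1: "(\<integral>\<^sup>+ \<omega>. (\<integral>\<^sup>+ t\<in>{0..T}. ennreal ((simple_process (ts n) (h n) t \<omega> - \<sigma> t \<omega>)\<^sup>2) \<partial>lborel) \<partial>M) < ennreal (\<epsilon> / 8)"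
    and n2: "(\<integral>\<^sup>+ \<omega>. ennreal ((simple_integral W (ts n) (h n) \<omega> - \<xi> \<omega>)\<^sup>2) \<partial>M) < ennreal (\<epsilon> / 4)"
    using eventually_happens'[OF sequentially_bot eventually_conj[OF ev1 ev2]] by blast
  define tsn where "tsn = ts n"
  define hn where "hn = h n"
  define K where "K = length tsn - 1"
  define u1 where "u1 i = min (tsn ! i) t" for i
  define v1 where "v1 i = min (tsn ! Suc i) t" for i
  define u2 where "u2 i = max (tsn ! i) t" for i
  define v2 where "v2 i = max (tsn ! Suc i) t" for i
  define Y where "Y \<omega> = (\<Sum>i<K. hn i \<omega> * (W (v1 i) \<omega> - W (u1 i) \<omega>))" for \<omega>
  define R where "R \<omega> = (\<Sum>i<K. hn i \<omega> * (W (v2 i) \<omega> - W (u2 i) \<omega>))" for \<omega>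
  define I where "I = simple_integral W tsn hn"
  have admn: "simple_admissible M F T tsn hn" unfolding tsn_def hn_def by (rule adm)
  note af = adm_facts[OF admn]
  have ti: "0 \<le> tsn ! i" "tsn ! Suc i \<le> T" "tsn ! i < tsn ! Suc i" if "i < K" for i
    using af(1)[of i] af(1)[of "Suc i"] af(2)[of i "Suc i"] that unfolding K_def by auto
  have tij: "tsn ! Suc i \<le> tsn ! j" if "i < j" "j < K" for i j
    using af(3)[of "Suc i" j] that unfolding K_def by auto
  have hnm: "hn i \<in> borel_measurable (F (tsn ! i))" if "i < K" for i
    using af(4) that unfolding K_def by auto
  have hnb: "\<exists>C. \<forall>\<omega>\<in>space M. \<bar>hn i \<omega>\<bar> \<le> C" if "i < K" for i
    using af(5) that unfolding K_def by auto
  have hnM: "hn i \<in> borel_measurable M" if "i < K" for i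
    using fps_M[OF fp _ _ hnm[OF that]] ti[OF that] by auto
  have dec: "I \<omega> = Y \<omega> + R \<omega>" for \<omega>
  proof -
    have key: "W (min x t) \<omega> + W (max x t) \<omega> = W x \<omega> + W t \<omega>" for x
      by (cases "x \<le> t") (auto simp: min_def max_def)
    have "hn i \<omega> * (W (tsn ! Suc i) \<omega> - W (tsn ! i) \<omega>) =
        hn i \<omega> * (W (v1 i) \<omega> - W (u1 i) \<omega>) + hn i \<omega> * (W (v2 i) \<omega> - W (u2 i) \<omega>)" for i
    proof -
      have d: "W (tsn ! Suc i) \<omega> - W (tsn ! i) \<omega> = (W (v1 i) \<omega> - W (u1 i) \<omega>) + (W (v2 i) \<omega> - W (u2 i) \<omega>)"
        using key[of "tsn ! Suc i"] key[of "tsn ! i"] unfolding u1_def v1_def u2_def v2_def by linarith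
      show ?thesis by (simp only: d distrib_left)
    qed
    then show ?thesis
      unfolding I_def simple_integral_def Y_def R_def K_def[symmetric] sum.distrib[symmetric] by simp
  qed
  have Ym: "Y \<in> borel_measurable (F t)"
    unfolding Y_def
  proof (rule meas_sum[OF fp bm _ t(2)])
    fix i assume i: "i < K"
    show "0 \<le> u1 i \<and> u1 i \<le> v1 i \<and> v1 i \<le> t"
      using ti[OF i] t unfolding u1_def v1_def by auto
    assume "u1 i < v1 i"
    then have "u1 i = tsn ! i" unfolding u1_def v1_def by auto
    then show "hn i \<in> borel_measurable (F (u1 i))" using hnm[OF i] by simp
  qed
  have Yi: "integrable M (\<lambda>\<omega>. (Y \<omega>)\<^sup>2)"
  proof -
    have "integrable M (\<lambda>\<omega>. (\<Sum>i<K. hn i \<omega> * (W (v1 i) \<omega> - W (u1 i) \<omega>))\<^sup>2) \<and>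
      (\<integral>\<omega>. (\<Sum>i<K. hn i \<omega> * (W (v1 i) \<omega> - W (u1 i) \<omega>))\<^sup>2 \<partial>M) = (\<Sum>i<K. (\<integral>\<omega>. (hn i \<omega>)\<^sup>2 \<partial>M) * (v1 i - u1 i))"
    proof (rule isometry[OF fp bm])
      fix i assume i: "i < K"
      show "0 \<le> u1 i \<and> u1 i \<le> v1 i \<and> v1 i \<le> T"
        using ti[OF i] t unfolding u1_def v1_def by auto
      show "\<exists>C. \<forall>\<omega>\<in>space M. \<bar>hn i \<omega>\<bar> \<le> C" by (rule hnb[OF i])
      assume "u1 i < v1 i"
      then have "u1 i = tsn ! i" unfolding u1_def v1_def by auto
      then show "hn i \<in> borel_measurable (F (u1 i))" using hnm[OF i] by simp
    next
      fix i j assume "i < j" "j < K"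
      then show "v1 i \<le> u1 j" using tij[of i j] unfolding u1_def v1_def by auto
    qed
    then show ?thesis unfolding Y_def by blast
  qed
  have Riso: "integrable M (\<lambda>\<omega>. (R \<omega>)\<^sup>2) \<and>
    (\<integral>\<omega>. (R \<omega>)\<^sup>2 \<partial>M) = (\<Sum>i<K. (\<integral>\<omega>. (hn i \<omega>)\<^sup>2 \<partial>M) * (v2 i - u2 i))"
    unfolding R_def
  proof (rule isometry[OF fp bm])
    fix i assume i: "i < K"
    show "0 \<le> u2 i \<and> u2 i \<le> v2 i \<and> v2 i \<le> T"
      using ti[OF i] t unfolding u2_def v2_def by auto
    show "\<exists>C. \<forall>\<omega>\<in>space M. \<bar>hn i \<omega>\<bar> \<le> C" by (rule hnb[OF i])
    show "hn i \<in> borel_measurable (F (u2 i))"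
      using fps_sub[OF fp _ _ _ hnm[OF i]] ti[OF i] t unfolding u2_def by auto
  next
    fix i j assume "i < j" "j < K"
    then show "v2 i \<le> u2 j" using tij[of i j] unfolding u2_def v2_def by auto
  qed
  have uv2: "u2 i \<le> v2 i" if "i < K" for i using ti[OF that] unfolding u2_def v2_def by auto
  have hn2: "integrable M (\<lambda>\<omega>. (hn i \<omega>)\<^sup>2)" if "i < K" for i
    using hnb[OF that] bounded_sq_int[OF prob_space_axioms hnM[OF that]] by blast
  have Wm: "W x \<in> borel_measurable M" if "0 \<le> x" "x \<le> T" for x
    using fps_M[OF fp that bm_W[OF bm that]] .
  have Rm: "R \<in> borel_measurable M" unfolding R_def
  proof (rule borel_measurable_sum)
    fix i assume "i \<in> {..<K}"
    then have i: "i < K" by simp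
    have a: "0 \<le> u2 i" "u2 i \<le> T" "0 \<le> v2 i" "v2 i \<le> T" using ti[OF i] t unfolding u2_def v2_def by auto
    show "(\<lambda>\<omega>. hn i \<omega> * (W (v2 i) \<omega> - W (u2 i) \<omega>)) \<in> borel_measurable M"
      by (rule borel_measurable_times[OF hnM[OF i] borel_measurable_diff[OF Wm[OF a(3,4)] Wm[OF a(1,2)]]])
  qed
  have Im: "I \<in> borel_measurable M" unfolding I_def simple_integral_def K_def[symmetric]
  proof (rule borel_measurable_sum)
    fix i assume "i \<in> {..<K}"
    then have i: "i < K" by simp
    have a: "0 \<le> tsn ! i" "tsn ! i \<le> T" "0 \<le> tsn ! Suc i" "tsn ! Suc i \<le> T" using ti[OF i] by auto
    show "(\<lambda>\<omega>. hn i \<omega> * (W (tsn ! Suc i) \<omega> - W (tsn ! i) \<omega>)) \<in> borel_measurable M"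
      by (rule borel_measurable_times[OF hnM[OF i] borel_measurable_diff[OF Wm[OF a(3,4)] Wm[OF a(1,2)]]])
  qed
  define G where "G \<omega> = (\<integral>\<^sup>+ s\<in>{0..T}. ennreal ((simple_process tsn hn s \<omega> - \<sigma> s \<omega>)\<^sup>2) \<partial>lborel)" for \<omega>
  have Gm: "G \<in> borel_measurable M" unfolding G_def using G_meas[OF fp pm _ admn] t by simp
  define c where "c = 2 * B\<^sup>2 * (T - t)"
  have c0: "0 \<le> c" unfolding c_def using t by simp
  have Rbound: "(\<integral>\<^sup>+\<omega>. ennreal ((R \<omega>)\<^sup>2) \<partial>M) \<le> 2 * (\<integral>\<^sup>+\<omega>. G \<omega> \<partial>M) + ennreal c"
  proof -
    define \<Phi> where "\<Phi> \<omega> = (\<Sum>i<K. (hn i \<omega>)\<^sup>2 * (v2 i - u2 i))" for \<omega>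
    have \<Phi>i: "integrable M \<Phi>" unfolding \<Phi>_def
    proof (rule Bochner_Integration.integrable_sum)
      fix i assume "i \<in> {..<K}"
      then show "integrable M (\<lambda>\<omega>. (hn i \<omega>)\<^sup>2 * (v2 i - u2 i))"
        using hn2[of i] by (intro integrable_mult_left) auto
    qed
    have "(\<integral>\<^sup>+\<omega>. ennreal ((R \<omega>)\<^sup>2) \<partial>M) = ennreal (\<integral>\<omega>. (R \<omega>)\<^sup>2 \<partial>M)"
      using Riso by (intro nn_integral_eq_integral) auto
    also have "(\<integral>\<omega>. (R \<omega>)\<^sup>2 \<partial>M) = (\<integral>\<omega>. \<Phi> \<omega> \<partial>M)"
    proof -
      have "(\<integral>\<omega>. \<Phi> \<omega> \<partial>M) = (\<Sum>i<K. \<integral>\<omega>. (hn i \<omega>)\<^sup>2 * (v2 i - u2 i) \<partial>M)"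
        unfolding \<Phi>_def
      proof (rule Bochner_Integration.integral_sum)
        fix i assume "i \<in> {..<K}"
        then show "integrable M (\<lambda>\<omega>. (hn i \<omega>)\<^sup>2 * (v2 i - u2 i))"
          using hn2[of i] by (intro integrable_mult_left) auto
      qed
      also have "\<dots> = (\<Sum>i<K. (\<integral>\<omega>. (hn i \<omega>)\<^sup>2 \<partial>M) * (v2 i - u2 i))"
        by (simp add: integral_mult_left_zero)
      finally show ?thesis using Riso by simp
    qed
    also have "ennreal (\<integral>\<omega>. \<Phi> \<omega> \<partial>M) = (\<integral>\<^sup>+\<omega>. ennreal (\<Phi> \<omega>) \<partial>M)"
      using \<Phi>i uv2 unfolding \<Phi>_def by (intro nn_integral_eq_integral[symmetric]) (auto intro!: sum_nonneg)
    also have "\<dots> \<le> (\<integral>\<^sup>+\<omega>. 2 * G \<omega> + ennreal c \<partial>M)"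
    proof (rule nn_integral_mono)
      fix \<omega> assume w: "\<omega> \<in> space M"
      show "ennreal (\<Phi> \<omega>) \<le> 2 * G \<omega> + ennreal c"
        unfolding \<Phi>_def G_def c_def K_def u2_def v2_def
        by (rule tail_bound[OF admn fp pm B t w])
    qed
    also have "\<dots> = 2 * (\<integral>\<^sup>+\<omega>. G \<omega> \<partial>M) + ennreal c"
      using Gm by (simp add: nn_integral_add nn_integral_cmult emeasure_space_1)
    finally show ?thesis .
  qed
  have main: "(\<integral>\<^sup>+\<omega>. ennreal ((\<xi> \<omega> - Y \<omega>)\<^sup>2) \<partial>M) \<le>
      2 * (\<integral>\<^sup>+\<omega>. ennreal ((I \<omega> - \<xi> \<omega>)\<^sup>2) \<partial>M) + 2 * (\<integral>\<^sup>+\<omega>. ennreal ((R \<omega>)\<^sup>2) \<partial>M)"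
  proof -
    have "(\<integral>\<^sup>+\<omega>. ennreal ((\<xi> \<omega> - Y \<omega>)\<^sup>2) \<partial>M) \<le> (\<integral>\<^sup>+\<omega>. 2 * ennreal ((I \<omega> - \<xi> \<omega>)\<^sup>2) + 2 * ennreal ((R \<omega>)\<^sup>2) \<partial>M)"
    proof (rule nn_integral_mono)
      fix \<omega>
      have e: "\<xi> \<omega> - Y \<omega> = R \<omega> - (I \<omega> - \<xi> \<omega>)" using dec[of \<omega>] by simp
      moreover have ab: "(a - b)\<^sup>2 \<le> 2 * b\<^sup>2 + 2 * a\<^sup>2" for a b :: real
      proof -
        have "0 \<le> (a + b)\<^sup>2" by simp
        then show ?thesis by (simp add: power2_eq_square algebra_simps)
      qed
      ultimately have "(\<xi> \<omega> - Y \<omega>)\<^sup>2 \<le> 2 * (I \<omega> - \<xi> \<omega>)\<^sup>2 + 2 * (R \<omega>)\<^sup>2"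
        by (subst e) (rule ab)
      then have "ennreal ((\<xi> \<omega> - Y \<omega>)\<^sup>2) \<le> ennreal (2 * (I \<omega> - \<xi> \<omega>)\<^sup>2 + 2 * (R \<omega>)\<^sup>2)"
        by (rule ennreal_leI)
      also have "\<dots> = 2 * ennreal ((I \<omega> - \<xi> \<omega>)\<^sup>2) + 2 * ennreal ((R \<omega>)\<^sup>2)"
        by (simp add: two_ennreal)
      finally show "ennreal ((\<xi> \<omega> - Y \<omega>)\<^sup>2) \<le> 2 * ennreal ((I \<omega> - \<xi> \<omega>)\<^sup>2) + 2 * ennreal ((R \<omega>)\<^sup>2)" .
    qed
    also have "\<dots> = 2 * (\<integral>\<^sup>+\<omega>. ennreal ((I \<omega> - \<xi> \<omega>)\<^sup>2) \<partial>M) + 2 * (\<integral>\<^sup>+\<omega>. ennreal ((R \<omega>)\<^sup>2) \<partial>M)"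
      using Im Rm xim by (simp add: nn_integral_add nn_integral_cmult)
    finally show ?thesis .
  qed
  have e1: "(\<integral>\<^sup>+\<omega>. G \<omega> \<partial>M) < ennreal (\<epsilon> / 8)" using n1 unfolding G_def tsn_def hn_def .
  have e2: "(\<integral>\<^sup>+\<omega>. ennreal ((I \<omega> - \<xi> \<omega>)\<^sup>2) \<partial>M) < ennreal (\<epsilon> / 4)" using n2 unfolding I_def tsn_def hn_def .
  have "(\<integral>\<^sup>+\<omega>. ennreal ((\<xi> \<omega> - Y \<omega>)\<^sup>2) \<partial>M) \<le> 2 * ennreal (\<epsilon> / 4) + 2 * (2 * ennreal (\<epsilon> / 8) + ennreal c)"
  proof -
    have "2 * (\<integral>\<^sup>+\<omega>. ennreal ((R \<omega>)\<^sup>2) \<partial>M) \<le> 2 * (2 * (\<integral>\<^sup>+\<omega>. G \<omega> \<partial>M) + ennreal c)"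
      using Rbound by (rule mult_left_mono) simp
    also have "\<dots> \<le> 2 * (2 * ennreal (\<epsilon> / 8) + ennreal c)"
      using e1 by (intro mult_left_mono add_right_mono) auto
    finally have a: "2 * (\<integral>\<^sup>+\<omega>. ennreal ((R \<omega>)\<^sup>2) \<partial>M) \<le> 2 * (2 * ennreal (\<epsilon> / 8) + ennreal c)" .
    have b: "2 * (\<integral>\<^sup>+\<omega>. ennreal ((I \<omega> - \<xi> \<omega>)\<^sup>2) \<partial>M) \<le> 2 * ennreal (\<epsilon> / 4)"
      using e2 by (intro mult_left_mono) auto
    show ?thesis using main add_mono[OF b a] by (rule order_trans)
  qed
  also have "\<dots> = ennreal (\<epsilon> / 2 + (\<epsilon> / 2 + 2 * c))"
    using e c0 by (simp add: two_ennreal ennreal_plus[symmetric] del: ennreal_plus)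
  also have "\<dots> = ennreal (4 * B\<^sup>2 * (T - t) + \<epsilon>)"
    by (rule arg_cong[where f=ennreal]) (simp add: c_def algebra_simps)
  finally show ?thesis using Ym Yi by blast
qed

lemma pred_gen:
  assumes fp: "filtered_prob_space M F T" and T0: "0 \<le> T"
  shows "space (predictable_sigma M F T) = {0..T} \<times> space M"
    and "\<And>a b A. 0 \<le> a \<Longrightarrow> a < b \<Longrightarrow> b \<le> T \<Longrightarrow> A \<in> sets (F a) \<Longrightarrow> {a<..b} \<times> A \<in> sets (predictable_sigma M F T)"
proof -
  define G where "G = ({{0} \<times> A | A. A \<in> sets (F 0)} \<union>
      {{s<..t} \<times> A | s t A. 0 \<le> s \<and> s < t \<and> t \<le> T \<and> A \<in> sets (F s)})"
  have sub: "G \<subseteq> Pow ({0..T} \<times> space M)"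
  proof
    fix X assume "X \<in> G"
    then consider (a) A where "X = {0} \<times> A" "A \<in> sets (F 0)"
      | (b) s t A where "X = {s<..t} \<times> A" "0 \<le> s" "s < t" "t \<le> T" "A \<in> sets (F s)"
      unfolding G_def by blast
    then show "X \<in> Pow ({0..T} \<times> space M)"
    proof cases
      case a
      have "0 \<le> T \<longrightarrow> space (F 0) = space M"
        using fp unfolding filtered_prob_space_def by auto
      moreover note T0
      ultimately show ?thesis using a sets.sets_into_space[OF a(2)] by auto
    next
      case b
      have "space (F s) = space M"
        using fp b unfolding filtered_prob_space_def by auto
      then show ?thesis using b sets.sets_into_space[OF b(5)] by auto
    qed
  qed
  have ps: "predictable_sigma M F T = sigma ({0..T} \<times> space M) G"
    unfolding predictable_sigma_def G_def by simp
  show "space (predictable_sigma M F T) = {0..T} \<times> space M"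
    unfolding ps using space_measure_of[OF sub] .
  fix a b A assume "0 \<le> a" "a < b" "b \<le> T" "A \<in> sets (F a)"
  then have "{a<..b} \<times> A \<in> G" unfolding G_def by blast
  then show "{a<..b} \<times> A \<in> sets (predictable_sigma M F T)"
    unfolding ps sets_measure_of[OF sub] by (rule sigma_sets.Basic)
qed

lemma pred_meas:
  assumes fp: "filtered_prob_space M F T" and ab: "0 \<le> a" "a < b" "b \<le> T"
    and g: "g \<in> borel_measurable (F a)"
  shows "(\<lambda>x. indicator {a<..b} (fst x) * g (snd x) :: real) \<in> borel_measurable (predictable_sigma M F T)"
proof -
  let ?P = "predictable_sigma M F T"
  have T0: "0 \<le> T" using ab by simp
  note ps = pred_gen[OF fp T0]
  have spF: "space (F a) = space M" using fp ab unfolding filtered_prob_space_def by auto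
  show ?thesis
  proof (rule measurableI)
    fix x assume "x \<in> space ?P" then show "indicator {a<..b} (fst x) * g (snd x) \<in> space borel" by simp
  next
    fix B :: "real set" assume B: "B \<in> sets borel"
    have gB: "g -` B \<inter> space M \<in> sets (F a)" using measurable_sets[OF g B] spF by simp
    have sM: "space M \<in> sets (F a)" using sets.top[of "F a"] spF by simp
    have S1: "{a<..b} \<times> (g -` B \<inter> space M) \<in> sets ?P" using ps(2)[OF ab gB] .
    have S2: "space ?P - {a<..b} \<times> space M \<in> sets ?P" using ps(2)[OF ab sM] by auto
    have eq: "(\<lambda>x. indicator {a<..b} (fst x) * g (snd x)) -` B \<inter> space ?P =
      {a<..b} \<times> (g -` B \<inter> space M) \<union> (if 0 \<in> B then space ?P - {a<..b} \<times> space M else {})"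
      using ab unfolding ps(1) by (auto simp: indicator_def of_bool_def split: if_splits)
    show "(\<lambda>x. indicator {a<..b} (fst x) * g (snd x)) -` B \<inter> space ?P \<in> sets ?P"
      unfolding eq using S1 S2 by auto
  qed
qed

lemma powr_ineq:
  fixes D d q :: real
  assumes d: "0 < d" and q: "1 \<le> q" "q \<le> 2"
  shows "\<bar>D / d\<bar> powr q * d \<le> d powr (1 - q / 2) + d powr (- q / 2) * D\<^sup>2"
proof -
  have e1: "\<bar>D / d\<bar> powr q * d = \<bar>D\<bar> powr q * d powr (1 - q)"
    using d by (simp add: abs_divide powr_divide powr_diff powr_one)
  show ?thesis
  proof (cases "\<bar>D\<bar> \<le> sqrt d")
    case True
    have "\<bar>D\<bar> powr q \<le> (sqrt d) powr q" using True q by (intro powr_mono2) auto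
    also have "(sqrt d) powr q = d powr (q / 2)"
      using d by (simp add: sqrt_def root_powr_inverse powr_powr)
    finally have "\<bar>D\<bar> powr q * d powr (1 - q) \<le> d powr (q / 2) * d powr (1 - q)"
      by (rule mult_right_mono) simp
    also have "\<dots> = d powr (1 - q / 2)" by (simp add: powr_add[symmetric])
    finally show ?thesis unfolding e1 by (smt (verit) mult_nonneg_nonneg powr_ge_zero zero_le_power2)
  next
    case False
    then have Dp: "0 < \<bar>D\<bar>" using d by (smt (verit) real_sqrt_ge_zero)
    have "\<bar>D\<bar> powr 2 * \<bar>D\<bar> powr (q - 2) = \<bar>D\<bar> powr q" by (simp only: powr_add[symmetric]) simp
    then have c: "\<bar>D\<bar> powr q = D\<^sup>2 * \<bar>D\<bar> powr (q - 2)" using Dp by (simp add: powr_numeral)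
    have a: "\<bar>D\<bar> powr (q - 2) \<le> (sqrt d) powr (q - 2)"
      using False q d by (intro powr_mono2') auto
    have b: "(sqrt d) powr (q - 2) = d powr ((q - 2) / 2)"
      using d by (simp add: sqrt_def root_powr_inverse powr_powr)
    have "D\<^sup>2 * \<bar>D\<bar> powr (q - 2) \<le> D\<^sup>2 * d powr ((q - 2) / 2)"
      using a b by (intro mult_left_mono) auto
    then have "\<bar>D\<bar> powr q \<le> D\<^sup>2 * d powr ((q - 2) / 2)" using c by simp
    then have "\<bar>D\<bar> powr q * d powr (1 - q) \<le> D\<^sup>2 * d powr ((q - 2) / 2) * d powr (1 - q)"
      by (rule mult_right_mono) simp
    also have "\<dots> = d powr (- q / 2) * D\<^sup>2"
      by (simp add: mult.assoc powr_add[symmetric] mult.commute) (simp add: field_simps)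
    finally show ?thesis unfolding e1 by (smt (verit) powr_ge_zero)
  qed
qed

lemma summable_powr_geom:
  fixes T r :: real
  assumes "0 < T" "0 < r"
  shows "summable (\<lambda>n. (T / 2 ^ Suc n) powr r)"
proof -
  have eq: "(T / 2 ^ Suc n) powr r = (T / 2) powr r * ((1/2) powr r) ^ n" for n
  proof -
    have "T / 2 ^ Suc n = (T / 2) * (1/2) ^ n" by (simp add: power_divide field_simps)
    moreover have "(T / 2 * (1/2) ^ n) powr r = (T / 2) powr r * ((1/2) ^ n) powr r"
      using assms by (intro powr_mult; simp)
    ultimately have "(T / 2 ^ Suc n) powr r = (T / 2) powr r * ((1/2) ^ n) powr r"
      by (simp only:)
    also have "((1/2::real) ^ n) powr r = ((1/2) powr r) ^ n"
      by (simp add: powr_power powr_realpow[symmetric] powr_powr mult.commute)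
    finally show ?thesis .
  qed
  have "(1/2::real) powr r = 2 powr (- r)" by (simp add: powr_divide powr_minus_divide)
  moreover have "(2::real) powr (- r) < 1" using assms by (intro powr_less_one) auto
  ultimately have "(1/2::real) powr r < 1" by simp
  then have "summable (\<lambda>n. ((1/2::real) powr r) ^ n)" by (intro summable_geometric) simp
  then show ?thesis unfolding eq by (rule summable_mult)
qed

theorem proposition4p2:
  fixes M :: "'a measure" and F :: "real \<Rightarrow> 'a measure" and T :: real
    and W \<sigma> :: "real \<Rightarrow> 'a \<Rightarrow> real" and \<xi> :: "'a \<Rightarrow> real" and p :: real
  assumes "0 < T"
    and "filtered_prob_space M F T"
    and "right_continuous_filtration F T"
    and "trivial_initial M F"
    and "all_local_martingales_continuous M F T"
    and "brownian_motion M F T W"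
    and "progressively_measurable F T \<sigma>" and "bounded_process M T \<sigma>"
    and "ito_integral_is M F T W \<sigma> \<xi>"
    and "1 \<le> p" and "p < 2"
  shows "\<exists>\<beta> :: real \<Rightarrow> 'a \<Rightarrow> real.
           (\<lambda>(t, \<omega>). \<beta> t \<omega>) \<in> borel_measurable (predictable_sigma M F T) \<and>
           (\<integral>\<^sup>+ \<omega>. (\<integral>\<^sup>+ t\<in>{0..T}. ennreal (\<bar>\<beta> t \<omega>\<bar> powr p) \<partial>lborel) \<partial>M) < \<infinity> \<and>
           (AE \<omega> in M. set_integrable lborel {0..T} (\<lambda>t. \<beta> t \<omega>) \<and>
              (LINT t:{0..T}|lborel. \<beta> t \<omega>) = \<xi> \<omega>)"
proof -
  note T0 = assms(1) and fp = assms(2) and bm = assms(6) and pm = assms(7) and ito = assms(9)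
  interpret prob_space M using fp by (rule fps_prob)
  obtain C where C: "\<forall>t\<in>{0..T}. \<forall>\<omega>\<in>space M. \<bar>\<sigma> t \<omega>\<bar> \<le> C"
    using assms(8) unfolding bounded_process_def by blast
  have Bd: "\<And>s \<omega>. s \<in> {0..T} \<Longrightarrow> \<omega> \<in> space M \<Longrightarrow> \<bar>\<sigma> s \<omega>\<bar> \<le> C" using C by blast
  have xim: "\<xi> \<in> borel_measurable M" using ito unfolding ito_integral_is_def by blast
  define \<delta> where "\<delta> n = T / 2 ^ n" for n :: nat
  define tt where "tt n = T - \<delta> n" for n
  define \<Delta> where "\<Delta> n = T / 2 ^ Suc n" for n :: nat
  define K' where "K' = 4 * C\<^sup>2 + 1"
  have K'0: "0 < K'" unfolding K'_def by (simp add: add_nonneg_pos)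
  have \<delta>pos: "0 < \<delta> n" for n unfolding \<delta>_def using T0 by simp
  have \<Delta>pos: "0 < \<Delta> n" for n unfolding \<Delta>_def using T0 by simp
  have \<delta>le: "\<delta> n \<le> T" for n
  proof -
    have "(1::real) \<le> 2 ^ n" by simp
    then show ?thesis unfolding \<delta>_def using T0 by (simp add: divide_le_eq)
  qed
  have \<delta>\<Delta>: "\<delta> n = 2 * \<Delta> n" for n unfolding \<delta>_def \<Delta>_def by simp
  have \<delta>S: "\<delta> (Suc n) = \<Delta> n" for n unfolding \<delta>_def \<Delta>_def by simp
  have ttS: "tt (Suc n) = tt n + \<Delta> n" for n unfolding tt_def using \<delta>\<Delta>[of n] \<delta>S[of n] by simp
  have tt0: "0 \<le> tt n" "tt n < T" for n unfolding tt_def using \<delta>le[of n] \<delta>pos[of n] by auto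
  have ttmono: "tt m \<le> tt n" if "m \<le> n" for m n
    using lift_Suc_mono_le[of tt, OF _ that] ttS \<Delta>pos by (simp add: less_imp_le)
  have ttSle: "tt (Suc n) \<le> T" for n using tt0[of "Suc n"] by simp
  have "\<forall>n. \<exists>Y. Y \<in> borel_measurable (F (tt n)) \<and> integrable M (\<lambda>\<omega>. (Y \<omega>)\<^sup>2) \<and>
      (\<integral>\<^sup>+\<omega>. ennreal ((\<xi> \<omega> - Y \<omega>)\<^sup>2) \<partial>M) \<le> ennreal (4 * C\<^sup>2 * (T - tt n) + \<delta> n)"
  proof
    fix n
    have ttT: "tt n \<le> T" using tt0(2)[of n] by (rule less_imp_le)
    show "\<exists>Y. Y \<in> borel_measurable (F (tt n)) \<and> integrable M (\<lambda>\<omega>. (Y \<omega>)\<^sup>2) \<and>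
      (\<integral>\<^sup>+\<omega>. ennreal ((\<xi> \<omega> - Y \<omega>)\<^sup>2) \<partial>M) \<le> ennreal (4 * C\<^sup>2 * (T - tt n) + \<delta> n)"
      using approx[OF fp bm pm Bd ito tt0(1)[of n] ttT \<delta>pos[of n]] by simp
  qed
  from choice[OF this] obtain Y where Yall: "\<forall>n. Y n \<in> borel_measurable (F (tt n)) \<and> integrable M (\<lambda>\<omega>. (Y n \<omega>)\<^sup>2) \<and>
      (\<integral>\<^sup>+\<omega>. ennreal ((\<xi> \<omega> - Y n \<omega>)\<^sup>2) \<partial>M) \<le> ennreal (4 * C\<^sup>2 * (T - tt n) + \<delta> n)"
    by blast
  have Y: "\<And>n. Y n \<in> borel_measurable (F (tt n))"
    "\<And>n. integrable M (\<lambda>\<omega>. (Y n \<omega>)\<^sup>2)"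
    "\<And>n. (\<integral>\<^sup>+\<omega>. ennreal ((\<xi> \<omega> - Y n \<omega>)\<^sup>2) \<partial>M) \<le> ennreal (4 * C\<^sup>2 * (T - tt n) + \<delta> n)"
    using Yall by auto
  have Yb: "(\<integral>\<^sup>+\<omega>. ennreal ((\<xi> \<omega> - Y n \<omega>)\<^sup>2) \<partial>M) \<le> ennreal (K' * \<delta> n)" for n
  proof -
    have "4 * C\<^sup>2 * (T - tt n) + \<delta> n = K' * \<delta> n" unfolding K'_def tt_def by (simp add: algebra_simps)
    then show ?thesis using Y(3)[of n] by simp
  qed
  have YM: "Y n \<in> borel_measurable M" for n using fps_M[OF fp _ _ Y(1)] tt0[of n] by simp
  define D where "D n \<omega> = Y n \<omega> - (case n of 0 \<Rightarrow> 0 | Suc m \<Rightarrow> Y m \<omega>)" for n \<omega>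
  have DF: "D n \<in> borel_measurable (F (tt n))" for n
  proof (cases n)
    case 0 then show ?thesis unfolding D_def using Y(1)[of 0] by simp
  next
    case (Suc m)
    have "Y m \<in> borel_measurable (F (tt n))"
      using fps_sub[OF fp _ _ _ Y(1)[of m]] tt0[of m] tt0[of n] ttmono[of m n] Suc by simp
    then show ?thesis unfolding D_def using Y(1)[of n] Suc by simp
  qed
  have DM: "D n \<in> borel_measurable M" for n using fps_M[OF fp _ _ DF] tt0[of n] by simp
  have tele: "(\<Sum>n<Suc N. D n \<omega>) = Y N \<omega>" for N \<omega>
    by (induction N) (auto simp: D_def)
  define y0 where "y0 = (\<integral>\<omega>. (Y 0 \<omega>)\<^sup>2 \<partial>M)"
  have y00: "0 \<le> y0" unfolding y0_def by simp
  define A where "A = 12 * K' + y0 / \<Delta> 0"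
  have A0: "0 \<le> A" unfolding A_def using K'0 y00 \<Delta>pos[of 0] by simp
  have D2: "(\<integral>\<^sup>+\<omega>. ennreal ((D n \<omega>)\<^sup>2) \<partial>M) \<le> ennreal (A * \<Delta> n)" for n
  proof (cases n)
    case 0
    have "(\<integral>\<^sup>+\<omega>. ennreal ((D n \<omega>)\<^sup>2) \<partial>M) = (\<integral>\<^sup>+\<omega>. ennreal ((Y 0 \<omega>)\<^sup>2) \<partial>M)"
      unfolding D_def 0 by simp
    also have "\<dots> = ennreal y0" unfolding y0_def using Y(2)[of 0] by (intro nn_integral_eq_integral) auto
    also have "\<dots> \<le> ennreal (A * \<Delta> n)"
    proof (rule ennreal_leI)
      have "y0 = (y0 / \<Delta> 0) * \<Delta> 0" using \<Delta>pos[of 0] by simp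
      also have "\<dots> \<le> A * \<Delta> 0" unfolding A_def using K'0 y00 \<Delta>pos[of 0] \<Delta>pos[of n] by (intro mult_right_mono) auto
      finally show "y0 \<le> A * \<Delta> n" using 0 by simp
    qed
    finally show ?thesis .
  next
    case (Suc m)
    have "(\<integral>\<^sup>+\<omega>. ennreal ((D n \<omega>)\<^sup>2) \<partial>M) \<le> (\<integral>\<^sup>+\<omega>. 2 * ennreal ((\<xi> \<omega> - Y n \<omega>)\<^sup>2) + 2 * ennreal ((\<xi> \<omega> - Y m \<omega>)\<^sup>2) \<partial>M)"
    proof (rule nn_integral_mono)
      fix \<omega>
      have e: "D n \<omega> = (\<xi> \<omega> - Y m \<omega>) - (\<xi> \<omega> - Y n \<omega>)" unfolding D_def Suc by simp
      have ab: "(a - b)\<^sup>2 \<le> 2 * b\<^sup>2 + 2 * a\<^sup>2" for a b :: real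
      proof -
        have "0 \<le> (a + b)\<^sup>2" by simp
        then show ?thesis by (simp add: power2_eq_square algebra_simps)
      qed
      have "(D n \<omega>)\<^sup>2 \<le> 2 * (\<xi> \<omega> - Y n \<omega>)\<^sup>2 + 2 * (\<xi> \<omega> - Y m \<omega>)\<^sup>2"
        by (subst e) (rule ab)
      then have "ennreal ((D n \<omega>)\<^sup>2) \<le> ennreal (2 * (\<xi> \<omega> - Y n \<omega>)\<^sup>2 + 2 * (\<xi> \<omega> - Y m \<omega>)\<^sup>2)"
        by (rule ennreal_leI)
      then show "ennreal ((D n \<omega>)\<^sup>2) \<le> 2 * ennreal ((\<xi> \<omega> - Y n \<omega>)\<^sup>2) + 2 * ennreal ((\<xi> \<omega> - Y m \<omega>)\<^sup>2)"
        by (simp add: two_ennreal)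
    qed
    also have "\<dots> = 2 * (\<integral>\<^sup>+\<omega>. ennreal ((\<xi> \<omega> - Y n \<omega>)\<^sup>2) \<partial>M) + 2 * (\<integral>\<^sup>+\<omega>. ennreal ((\<xi> \<omega> - Y m \<omega>)\<^sup>2) \<partial>M)"
      using xim YM[of n] YM[of m] by (simp add: nn_integral_add nn_integral_cmult)
    also have "\<dots> \<le> 2 * ennreal (K' * \<delta> n) + 2 * ennreal (K' * \<delta> m)"
      by (intro add_mono mult_left_mono Yb) auto
    also have "\<dots> = ennreal (2 * (K' * \<delta> n) + 2 * (K' * \<delta> m))"
      using K'0 \<delta>pos[of n] \<delta>pos[of m] by (simp add: two_ennreal)
    also have "\<dots> \<le> ennreal (A * \<Delta> n)"
    proof (rule ennreal_leI)
      have "\<delta> m = 4 * \<Delta> n" "\<delta> n = 2 * \<Delta> n" using \<delta>\<Delta>[of m] \<delta>S[of m] \<delta>\<Delta>[of n] Suc unfolding \<Delta>_def by auto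
      then have "2 * (K' * \<delta> n) + 2 * (K' * \<delta> m) = (12 * K') * \<Delta> n" by simp
      also have "\<dots> \<le> A * \<Delta> n"
      proof -
        have "0 \<le> y0 / \<Delta> 0" using y00 \<Delta>pos[of 0] by simp
        then show ?thesis unfolding A_def using \<Delta>pos[of n] by (intro mult_right_mono) auto
      qed
      finally show "2 * (K' * \<delta> n) + 2 * (K' * \<delta> m) \<le> A * \<Delta> n" .
    qed
    finally show ?thesis .
  qed
  define c where "c n \<omega> = D n \<omega> / \<Delta> n" for n \<omega>
  have cF: "c n \<in> borel_measurable (F (tt n))" for n unfolding c_def using DF[of n] by measurable
  have cM: "c n \<in> borel_measurable M" for n unfolding c_def using DM[of n] by measurable
  have Q: "(\<Sum>n. \<integral>\<^sup>+\<omega>. ennreal (\<bar>c n \<omega>\<bar> powr q * \<Delta> n) \<partial>M) < \<infinity>" if q: "1 \<le> q" "q < 2" for q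
  proof -
    have trm: "(\<integral>\<^sup>+\<omega>. ennreal (\<bar>c n \<omega>\<bar> powr q * \<Delta> n) \<partial>M) \<le> ennreal ((1 + A) * \<Delta> n powr (1 - q / 2))" for n
    proof -
      have "(\<integral>\<^sup>+\<omega>. ennreal (\<bar>c n \<omega>\<bar> powr q * \<Delta> n) \<partial>M) \<le>
          (\<integral>\<^sup>+\<omega>. ennreal (\<Delta> n powr (1 - q / 2)) + ennreal (\<Delta> n powr (- q / 2)) * ennreal ((D n \<omega>)\<^sup>2) \<partial>M)"
      proof (rule nn_integral_mono)
        fix \<omega>
        have "\<bar>c n \<omega>\<bar> powr q * \<Delta> n \<le> \<Delta> n powr (1 - q / 2) + \<Delta> n powr (- q / 2) * (D n \<omega>)\<^sup>2"
          unfolding c_def using powr_ineq[OF \<Delta>pos[of n], of q "D n \<omega>"] q by simp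
        then have "ennreal (\<bar>c n \<omega>\<bar> powr q * \<Delta> n) \<le> ennreal (\<Delta> n powr (1 - q / 2) + \<Delta> n powr (- q / 2) * (D n \<omega>)\<^sup>2)"
          by (rule ennreal_leI)
        then show "ennreal (\<bar>c n \<omega>\<bar> powr q * \<Delta> n) \<le> ennreal (\<Delta> n powr (1 - q / 2)) + ennreal (\<Delta> n powr (- q / 2)) * ennreal ((D n \<omega>)\<^sup>2)"
          by (simp add: ennreal_mult)
      qed
      also have "\<dots> = ennreal (\<Delta> n powr (1 - q / 2)) + ennreal (\<Delta> n powr (- q / 2)) * (\<integral>\<^sup>+\<omega>. ennreal ((D n \<omega>)\<^sup>2) \<partial>M)"
        using DM[of n] by (simp add: nn_integral_add nn_integral_cmult emeasure_space_1)
      also have "\<dots> \<le> ennreal (\<Delta> n powr (1 - q / 2)) + ennreal (\<Delta> n powr (- q / 2)) * ennreal (A * \<Delta> n)"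
        by (intro add_mono mult_left_mono D2) auto
      also have "\<dots> = ennreal ((1 + A) * \<Delta> n powr (1 - q / 2))"
      proof -
        have "\<Delta> n powr (- q / 2) * \<Delta> n = \<Delta> n powr (- q / 2) * \<Delta> n powr 1"
          using \<Delta>pos[of n] by simp
        also have "\<dots> = \<Delta> n powr (- q / 2 + 1)" by (rule powr_add[symmetric])
        also have "- q / 2 + 1 = 1 - q / 2" by simp
        finally have "\<Delta> n powr (- q / 2) * \<Delta> n = \<Delta> n powr (1 - q / 2)" .
        then have "\<Delta> n powr (1 - q / 2) + \<Delta> n powr (- q / 2) * (A * \<Delta> n) = (1 + A) * \<Delta> n powr (1 - q / 2)"
          by (simp add: algebra_simps)
        then show ?thesis using A0 \<Delta>pos[of n] by (simp add: ennreal_mult[symmetric] ennreal_plus[symmetric] del: ennreal_plus)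
      qed
      finally show ?thesis .
    qed
    have sm: "summable (\<lambda>n. (1 + A) * \<Delta> n powr (1 - q / 2))"
      unfolding \<Delta>_def using summable_powr_geom[OF T0, of "1 - q / 2"] q by (intro summable_mult) auto
    have "(\<Sum>n. \<integral>\<^sup>+\<omega>. ennreal (\<bar>c n \<omega>\<bar> powr q * \<Delta> n) \<partial>M) \<le> (\<Sum>n. ennreal ((1 + A) * \<Delta> n powr (1 - q / 2)))"
      by (intro suminf_le trm summableI)
    also have "\<dots> = ennreal (\<Sum>n. (1 + A) * \<Delta> n powr (1 - q / 2))"
      using sm A0 by (intro suminf_ennreal2) auto
    also have "\<dots> < \<infinity>" by simp
    finally show ?thesis .
  qed
  define I where "I n = {tt n <.. tt (Suc n)}" for n
  have ttlt: "tt n < tt (Suc n)" for n using ttS[of n] \<Delta>pos[of n] by simp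
  have Isub: "I n \<subseteq> {0..T}" for n unfolding I_def using tt0[of n] ttSle[of n] by auto
  have Idisj: "m = n" if "t \<in> I m" "t \<in> I n" for t m n
  proof (rule ccontr)
    assume "m \<noteq> n"
    then consider "m < n" | "n < m" by linarith
    then show False
    proof cases
      case 1 then have "tt (Suc m) \<le> tt n" using ttmono[of "Suc m" n] by simp
      then show False using that unfolding I_def by auto
    next
      case 2 then have "tt (Suc n) \<le> tt m" using ttmono[of "Suc n" m] by simp
      then show False using that unfolding I_def by auto
    qed
  qed
  have Ifin: "finite {n. t \<in> I n}" for t
  proof (cases "\<exists>k. t \<in> I k")
    case True
    then obtain k where "t \<in> I k" by blast
    then have "{n. t \<in> I n} = {k}" using Idisj by blast
    then show ?thesis by simp
  next
    case False then show ?thesis by simp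
  qed
  have mI: "measure lborel (I n) = \<Delta> n" for n
    unfolding I_def using measure_lborel_Ioc[of "tt n" "tt (Suc n)"] ttS[of n] \<Delta>pos[of n] by simp
  have emI: "emeasure lborel (I n) = ennreal (\<Delta> n)" for n unfolding I_def using ttS[of n] \<Delta>pos[of n] by simp
  have Iset: "I n \<in> sets lborel" for n unfolding I_def by simp
  define \<beta> where "\<beta> t \<omega> = (\<Sum>n. indicator (I n) t * c n \<omega>)" for t \<omega>
  have \<beta>k: "\<beta> t \<omega> = c k \<omega>" if "t \<in> I k" for t \<omega> k
  proof -
    have "\<beta> t \<omega> = (\<Sum>n\<in>{k}. indicator (I n) t * c n \<omega>)"
      unfolding \<beta>_def
    proof (rule suminf_finite)
      fix n assume "n \<notin> {k}"
      then have "t \<notin> I n" using Idisj[OF that] by blast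
      then show "indicator (I n) t * c n \<omega> = 0" by simp
    qed simp
    then show ?thesis using that by simp
  qed
  have \<beta>0: "\<beta> t \<omega> = 0" if "\<And>n. t \<notin> I n" for t \<omega>
    unfolding \<beta>_def using that by simp
  show ?thesis
  proof (intro exI[of _ \<beta>] conjI)
    have eqf: "(\<lambda>(t, \<omega>). \<beta> t \<omega>) = (\<lambda>x. \<Sum>n. indicator (I n) (fst x) * c n (snd x))"
      unfolding \<beta>_def by (simp add: split_beta')
    show "(\<lambda>(t, \<omega>). \<beta> t \<omega>) \<in> borel_measurable (predictable_sigma M F T)"
      unfolding eqf
    proof (rule borel_measurable_suminf)
      fix n
      show "(\<lambda>x. indicator (I n) (fst x) * c n (snd x)) \<in> borel_measurable (predictable_sigma M F T)"
        unfolding I_def by (rule pred_meas[OF fp tt0(1) ttlt ttSle cF])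
    qed
  next
    have inner: "(\<integral>\<^sup>+ t\<in>{0..T}. ennreal (\<bar>\<beta> t \<omega>\<bar> powr p) \<partial>lborel) = (\<Sum>n. ennreal (\<bar>c n \<omega>\<bar> powr p * \<Delta> n))" for \<omega>
    proof -
      have "(\<integral>\<^sup>+ t. ennreal (\<bar>\<beta> t \<omega>\<bar> powr p) * indicator {0..T} t \<partial>lborel)
          = (\<integral>\<^sup>+ t. (\<Sum>n. ennreal (\<bar>c n \<omega>\<bar> powr p) * indicator (I n) t) \<partial>lborel)"
      proof (rule nn_integral_cong)
        fix t
        show "ennreal (\<bar>\<beta> t \<omega>\<bar> powr p) * indicator {0..T} t = (\<Sum>n. ennreal (\<bar>c n \<omega>\<bar> powr p) * indicator (I n) t)"
        proof (cases "\<exists>k. t \<in> I k")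
          case True
          then obtain k where k: "t \<in> I k" by blast
          have "(\<Sum>n. ennreal (\<bar>c n \<omega>\<bar> powr p) * indicator (I n) t) = (\<Sum>n\<in>{k}. ennreal (\<bar>c n \<omega>\<bar> powr p) * indicator (I n) t)"
          proof (rule suminf_finite)
            fix n assume "n \<notin> {k}"
            then have "t \<notin> I n" using Idisj[OF k] by blast
            then show "ennreal (\<bar>c n \<omega>\<bar> powr p) * indicator (I n) t = 0" by simp
          qed simp
          then show ?thesis using k \<beta>k[OF k] Isub[of k] by auto
        next
          case False
          then show ?thesis using \<beta>0[of t \<omega>] by simp
        qed
      qed
      also have "\<dots> = (\<Sum>n. \<integral>\<^sup>+ t. ennreal (\<bar>c n \<omega>\<bar> powr p) * indicator (I n) t \<partial>lborel)"
      proof (rule nn_integral_suminf)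
        fix n
        have [measurable]: "I n \<in> sets lborel" by (rule Iset)
        show "(\<lambda>t. ennreal (\<bar>c n \<omega>\<bar> powr p) * indicator (I n) t) \<in> borel_measurable lborel"
          by measurable
      qed
      also have "\<dots> = (\<Sum>n. ennreal (\<bar>c n \<omega>\<bar> powr p * \<Delta> n))"
      proof (rule suminf_cong)
        fix n
        show "(\<integral>\<^sup>+ t. ennreal (\<bar>c n \<omega>\<bar> powr p) * indicator (I n) t \<partial>lborel) = ennreal (\<bar>c n \<omega>\<bar> powr p * \<Delta> n)"
          using Iset[of n] emI[of n] \<Delta>pos[of n] by (simp add: nn_integral_cmult_indicator ennreal_mult)
      qed
      finally show ?thesis .
    qed
    have "(\<integral>\<^sup>+ \<omega>. (\<integral>\<^sup>+ t\<in>{0..T}. ennreal (\<bar>\<beta> t \<omega>\<bar> powr p) \<partial>lborel) \<partial>M)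
        = (\<integral>\<^sup>+ \<omega>. (\<Sum>n. ennreal (\<bar>c n \<omega>\<bar> powr p * \<Delta> n)) \<partial>M)"
      unfolding inner ..
    also have "\<dots> = (\<Sum>n. \<integral>\<^sup>+ \<omega>. ennreal (\<bar>c n \<omega>\<bar> powr p * \<Delta> n) \<partial>M)"
    proof (rule nn_integral_suminf)
      fix n show "(\<lambda>\<omega>. ennreal (\<bar>c n \<omega>\<bar> powr p * \<Delta> n)) \<in> borel_measurable M"
        using cM[of n] by measurable
    qed
    also have "\<dots> < \<infinity>" using Q[OF assms(10,11)] .
    finally show "(\<integral>\<^sup>+ \<omega>. (\<integral>\<^sup>+ t\<in>{0..T}. ennreal (\<bar>\<beta> t \<omega>\<bar> powr p) \<partial>lborel) \<partial>M) < \<infinity>" .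
  next
    have ae1: "AE \<omega> in M. summable (\<lambda>n. \<bar>D n \<omega>\<bar>)"
    proof -
      have mf: "(\<lambda>\<omega>. ennreal (\<bar>c n \<omega>\<bar> powr 1 * \<Delta> n)) \<in> borel_measurable M" for n
        using cM[of n] by measurable
      have "(\<integral>\<^sup>+\<omega>. (\<Sum>n. ennreal (\<bar>c n \<omega>\<bar> powr 1 * \<Delta> n)) \<partial>M) = (\<Sum>n. \<integral>\<^sup>+\<omega>. ennreal (\<bar>c n \<omega>\<bar> powr 1 * \<Delta> n) \<partial>M)"
        by (rule nn_integral_suminf) (rule mf)
      also have "\<dots> < \<infinity>" by (rule Q) auto
      finally have fin: "(\<integral>\<^sup>+\<omega>. (\<Sum>n. ennreal (\<bar>c n \<omega>\<bar> powr 1 * \<Delta> n)) \<partial>M) \<noteq> \<infinity>" by simp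
      have "AE \<omega> in M. (\<Sum>n. ennreal (\<bar>c n \<omega>\<bar> powr 1 * \<Delta> n)) \<noteq> \<infinity>"
        by (rule nn_integral_PInf_AE[OF _ fin]) (use mf in measurable)
      then show ?thesis
      proof (rule eventually_mono)
        fix \<omega> assume a: "(\<Sum>n. ennreal (\<bar>c n \<omega>\<bar> powr 1 * \<Delta> n)) \<noteq> \<infinity>"
        have a': "(\<Sum>n. ennreal (\<bar>c n \<omega>\<bar> powr 1 * \<Delta> n)) \<noteq> top" using a by simp
        have nn: "0 \<le> \<bar>c n \<omega>\<bar> powr 1 * \<Delta> n" for n using \<Delta>pos[of n] by simp
        have "summable (\<lambda>n. \<bar>c n \<omega>\<bar> powr 1 * \<Delta> n)"
          by (rule summable_suminf_not_top[OF nn a'])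
        moreover have "\<bar>c n \<omega>\<bar> powr 1 * \<Delta> n = \<bar>D n \<omega>\<bar>" for n
          unfolding c_def using \<Delta>pos[of n] by (simp add: abs_divide)
        ultimately show "summable (\<lambda>n. \<bar>D n \<omega>\<bar>)" by simp
      qed
    qed
    have ae2: "AE \<omega> in M. (\<lambda>n. Y n \<omega>) \<longlonglongrightarrow> \<xi> \<omega>"
    proof -
      have mf: "(\<lambda>\<omega>. ennreal ((\<xi> \<omega> - Y n \<omega>)\<^sup>2)) \<in> borel_measurable M" for n
        using xim YM[of n] by measurable
      have sd: "summable (\<lambda>n. K' * \<delta> n)"
      proof -
        have "\<delta> n = T * (1/2) ^ n" for n unfolding \<delta>_def by (simp add: power_one_over)
        then show ?thesis by (simp add: summable_mult summable_geometric)
      qed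
      have "(\<integral>\<^sup>+\<omega>. (\<Sum>n. ennreal ((\<xi> \<omega> - Y n \<omega>)\<^sup>2)) \<partial>M) = (\<Sum>n. \<integral>\<^sup>+\<omega>. ennreal ((\<xi> \<omega> - Y n \<omega>)\<^sup>2) \<partial>M)"
        by (rule nn_integral_suminf) (rule mf)
      also have "\<dots> \<le> (\<Sum>n. ennreal (K' * \<delta> n))"
        by (intro suminf_le Yb summableI)
      also have "\<dots> = ennreal (\<Sum>n. K' * \<delta> n)"
        using sd K'0 \<delta>pos by (intro suminf_ennreal2) (auto intro: less_imp_le)
      finally have fin: "(\<integral>\<^sup>+\<omega>. (\<Sum>n. ennreal ((\<xi> \<omega> - Y n \<omega>)\<^sup>2)) \<partial>M) \<noteq> \<infinity>"
        by (auto simp: top_unique)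
      have "AE \<omega> in M. (\<Sum>n. ennreal ((\<xi> \<omega> - Y n \<omega>)\<^sup>2)) \<noteq> \<infinity>"
        by (rule nn_integral_PInf_AE[OF _ fin]) (use mf in measurable)
      then show ?thesis
      proof (rule eventually_mono)
        fix \<omega> assume a: "(\<Sum>n. ennreal ((\<xi> \<omega> - Y n \<omega>)\<^sup>2)) \<noteq> \<infinity>"
        have a': "(\<Sum>n. ennreal ((\<xi> \<omega> - Y n \<omega>)\<^sup>2)) \<noteq> top" using a by simp
        have "summable (\<lambda>n. (\<xi> \<omega> - Y n \<omega>)\<^sup>2)"
          by (rule summable_suminf_not_top[OF _ a']) simp
        then have "(\<lambda>n. (\<xi> \<omega> - Y n \<omega>)\<^sup>2) \<longlonglongrightarrow> 0" by (rule summable_LIMSEQ_zero)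
        then have "(\<lambda>n. sqrt ((\<xi> \<omega> - Y n \<omega>)\<^sup>2)) \<longlonglongrightarrow> sqrt 0" by (rule tendsto_real_sqrt)
        then have "(\<lambda>n. \<bar>Y n \<omega> - \<xi> \<omega>\<bar>) \<longlonglongrightarrow> 0" by (simp add: abs_minus_commute)
        then have "(\<lambda>n. Y n \<omega> - \<xi> \<omega>) \<longlonglongrightarrow> 0" by (simp add: tendsto_rabs_zero_iff)
        then show "(\<lambda>n. Y n \<omega>) \<longlonglongrightarrow> \<xi> \<omega>" by (simp add: LIM_zero_iff)
      qed
    qed
    show "AE \<omega> in M. set_integrable lborel {0..T} (\<lambda>t. \<beta> t \<omega>) \<and> (LINT t:{0..T}|lborel. \<beta> t \<omega>) = \<xi> \<omega>"
      using ae1 ae2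
    proof eventually_elim
      case (elim \<omega>)
      note s = elim(1) and l = elim(2)
      define f where "f n t = indicator (I n) t * c n \<omega>" for n t
      have hfun: "(\<lambda>t. indicator {0..T} t *\<^sub>R \<beta> t \<omega>) = (\<lambda>t. \<Sum>n. f n t)"
      proof
        fix t
        show "indicator {0..T} t *\<^sub>R \<beta> t \<omega> = (\<Sum>n. f n t)"
        proof (cases "\<exists>k. t \<in> I k")
          case True
          then obtain k where k: "t \<in> I k" by blast
          then have "t \<in> {0..T}" using Isub by blast
          then show ?thesis unfolding f_def \<beta>_def by simp
        next
          case False
          then show ?thesis unfolding f_def using \<beta>0[of t \<omega>] by simp
        qed
      qed
      have fint: "integrable lborel (f n)" for n
        unfolding f_def using Iset[of n] emI[of n] by (intro integrable_mult_left integrable_real_indicator) auto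
      have fae: "AE t in lborel. summable (\<lambda>n. norm (f n t))"
      proof (rule AE_I2)
        fix t show "summable (\<lambda>n. norm (f n t))"
          by (rule summable_finite[OF Ifin[of t]]) (simp add: f_def)
      qed
      have fnorm: "(\<integral>t. norm (f n t) \<partial>lborel) = \<bar>D n \<omega>\<bar>" for n
      proof -
        have "(\<lambda>t. norm (f n t)) = (\<lambda>t. indicator (I n) t * \<bar>c n \<omega>\<bar>)"
          unfolding f_def by (auto simp: indicator_def abs_mult)
        then have "(\<integral>t. norm (f n t) \<partial>lborel) = measure lborel (I n) * \<bar>c n \<omega>\<bar>" by simp
        then show ?thesis using mI[of n] \<Delta>pos[of n] unfolding c_def by (simp add: abs_divide)
      qed
      have fs: "summable (\<lambda>n. (\<integral>t. norm (f n t) \<partial>lborel))" unfolding fnorm using s .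
      have fi: "(\<integral>t. f n t \<partial>lborel) = D n \<omega>" for n
        unfolding f_def using mI[of n] \<Delta>pos[of n] unfolding c_def by simp
      have Dsums: "(\<lambda>n. D n \<omega>) sums \<xi> \<omega>"
        unfolding sums_def
      proof (rule LIMSEQ_imp_Suc)
        show "(\<lambda>N. \<Sum>n<Suc N. D n \<omega>) \<longlonglongrightarrow> \<xi> \<omega>" unfolding tele using l .
      qed
      show ?case
      proof
        show "set_integrable lborel {0..T} (\<lambda>t. \<beta> t \<omega>)"
          unfolding set_integrable_def hfun by (rule integrable_suminf[OF fint fae fs])
        have "(LINT t:{0..T}|lborel. \<beta> t \<omega>) = (\<integral>t. (\<Sum>n. f n t) \<partial>lborel)"
          unfolding set_lebesgue_integral_def hfun ..
        also have "\<dots> = (\<Sum>n. \<integral>t. f n t \<partial>lborel)" by (rule integral_suminf[OF fint fae fs])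
        also have "\<dots> = (\<Sum>n. D n \<omega>)" unfolding fi ..
        also have "\<dots> = \<xi> \<omega>" using Dsums by (rule sums_unique[symmetric])
        finally show "(LINT t:{0..T}|lborel. \<beta> t \<omega>) = \<xi> \<omega>" .
      qed
    qed
  qed
qed


end
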